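(* For all $z,w\in\tilde\Gamma^dV$ the element $(z,w)_d$ is divisible by $d!$ in $R$, and the form $(z,w)_\sim:=\frac1{d!}(z,w)_d$ on $\tilde\Gamma^dV$ is even and non-degenerate. Moreover, it is supersymmetric or superantisymmetric, depending on the parity of $d$ and on whether $(\cdot,\cdot)$ is supersymmetric or superantisymmetric.
   Context: Let $R$ be a principal ideal domain of characteristic $0$. A calibrated $R$-supermodule is a free $R$-supermodule $V=V_{\bar0}\oplus V_{\bar1}$ of finite rank with a decomposition $V_{\bar0}=V_{\mathfrak a}\oplus V_{\mathfrak c}$ into free $R$-submodules. For bases $B_{\mathfrak a},B_{\mathfrak c},B_{\bar1}$ of the three pieces and a total order on $B=B_{\mathfrak a}\sqcup B_{\mathfrak c}\sqcup B_{\bar1}$: $\mathfrak S_d$ acts on $V^{\otimes d}$ on the right by $(v_1\otimes\cdots\otimes v_d)^\sigma=(-1)^{\langle\sigma;\mathbf v\rangle}v_{\sigma1}\otimes\cdots\otimes v_{\sigma d}$ with $\langle\sigma;\mathbf v\rangle$ the number of $k<l$ with $\sigma^{-1}k>\sigma^{-1}l$ and $v_k,v_l$ odd; $\Gamma^dV$ denotes the invariants; for $\mathbf b\in B^d$, $\langle\mathbf b\rangle$ is the number of $k<l$ with $b_k,b_l\in B_{\bar1}$, $b_k>b_l$, and $[\mathbf b]^!_{\mathfrak c}=\prod_{b\in B_{\mathfrak c}}\#\{k:b_k=b\}!$; $\mathrm{Seq}(B,d)$ is the set of $\mathbf b\in B^d$ in which only elements of $B_{\mathfrak a}\sqcup B_{\mathfrak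 c}$ may repeat; $x_{\mathbf b}=\sum(-1)^{\langle\mathbf b\rangle+\langle\mathbf b'\rangle}b'_1\otimes\cdots\otimes b'_d$ over the distinct place-permutations $\mathbf b'$ of $\mathbf b$; $y_{\mathbf b}=[\mathbf b]^!_{\mathfrak c}x_{\mathbf b}$; $\tilde\Gamma^dV=\mathrm{span}_R\{y_{\mathbf b}:\mathbf b\in\mathrm{Seq}(B,d)\}$ (this submodule does not depend on the choice of the complement $V_{\mathfrak c}$ or of bases). Setting: $V$ is a calibrated $R$-supermodule with an even, non-degenerate, $R$-valued bilinear form $(\cdot,\cdot)$, supersymmetric or superantisymmetric, such that $(V_{\mathfrak a},V_{\mathfrak a})=0$ and $V_{\mathfrak c}$ can be chosen so that the restriction of $(\cdot,\cdot)$ to $V_{\mathfrak a}\times V_{\mathfrak c}$ is a perfect pairing. The form on $V^{\otimes d}$ is $(v_1\otimes\cdots\otimes v_d,w_1\otimes\cdots\otimes w_d)_d=(-1)^{\langle\mathbf v,\mathbf w\rangle}\prod_k(v_k,w_k)$, where $\langle\mathbf v,\mathbf w\rangle$ is the number of pairs $k>l$ with $v_k$ and $w_l$ odd. *)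

theory Defs
  imports Main "HOL-Library.Multiset"
begin

definition pid_ring :: "'r::comm_ring_1 itself \<Rightarrow> bool" where
  "pid_ring _ \<longleftrightarrow>
     (\<forall>I::'r set. (0 \<in> I \<and> (\<forall>x\<in>I. \<forall>y\<in>I. x + y \<in> I) \<and> (\<forall>r. \<forall>x\<in>I. r * x \<in> I))
        \<longrightarrow> (\<exists>a. I = {a * r | r. True}))"

text \<open>The free module with basis X: coordinate functions supported in X.\<close>
definition fvec :: "'b set \<Rightarrow> ('b \<Rightarrow> 'r::zero) set" where
  "fvec X = {x. \<forall>i. i \<notin> X \<longrightarrow> x i = 0}"

definition lin_functional :: "('x \<Rightarrow> 'r::comm_ring_1) set \<Rightarrow> (('x \<Rightarrow> 'r) \<Rightarrow> 'r) \<Rightarrow> bool" where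
  "lin_functional M \<phi> \<longleftrightarrow>
     (\<forall>x\<in>M. \<forall>y\<in>M. \<forall>a b. \<phi> (\<lambda>i. a * x i + b * y i) = a * \<phi> x + b * \<phi> y)"

text \<open>Perfect pairing M x N -> R: both induced maps to the dual modules are bijective.
  A form on M is non-degenerate iff it is a perfect pairing M x M.\<close>
definition perfect_pairing ::
  "('x \<Rightarrow> 'r::comm_ring_1) set \<Rightarrow> ('y \<Rightarrow> 'r) set \<Rightarrow> (('x \<Rightarrow> 'r) \<Rightarrow> ('y \<Rightarrow> 'r) \<Rightarrow> 'r) \<Rightarrow> bool" where
  "perfect_pairing M N F \<longleftrightarrow>
     (\<forall>\<phi>. lin_functional N \<phi> \<longrightarrow> (\<exists>!x. x \<in> M \<and> (\<forall>y\<in>N. F x y = \<phi> y))) \<and>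
     (\<forall>\<psi>. lin_functional M \<psi> \<longrightarrow> (\<exists>!y. y \<in> N \<and> (\<forall>x\<in>M. F x y = \<psi> x)))"

definition vform :: "'b set \<Rightarrow> 'b set \<Rightarrow> ('b \<Rightarrow> 'b \<Rightarrow> 'r::comm_ring_1) \<Rightarrow> ('b \<Rightarrow> 'r) \<Rightarrow> ('b \<Rightarrow> 'r) \<Rightarrow> 'r" where
  "vform X Y g x y = (\<Sum>i\<in>X. \<Sum>j\<in>Y. x i * y j * g i j)"

text \<open>Tensors in V^{\<otimes>d} are functions on words (lists) of length d over B.\<close>
definition tuples :: "'b set \<Rightarrow> nat \<Rightarrow> 'b list set" where
  "tuples B d = {bs. length bs = d \<and> set bs \<subseteq> B}"

definition tsign :: "'b set \<Rightarrow> 'b list \<Rightarrow> 'b list \<Rightarrow> nat" where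
  "tsign B1 bs cs = card {(k, l). l < k \<and> k < length bs \<and> bs ! k \<in> B1 \<and> cs ! l \<in> B1}"

definition tform :: "'b set \<Rightarrow> 'b set \<Rightarrow> ('b \<Rightarrow> 'b \<Rightarrow> 'r::comm_ring_1) \<Rightarrow> nat
    \<Rightarrow> ('b list \<Rightarrow> 'r) \<Rightarrow> ('b list \<Rightarrow> 'r) \<Rightarrow> 'r" where
  "tform B B1 g d x y =
     (\<Sum>bs\<in>tuples B d. \<Sum>cs\<in>tuples B d.
        x bs * y cs * (-1) ^ tsign B1 bs cs * (\<Prod>k<d. g (bs ! k) (cs ! k)))"

definition inv_odd :: "'b::linorder set \<Rightarrow> 'b list \<Rightarrow> nat" where
  "inv_odd B1 bs = card {(k, l). k < l \<and> l < length bs \<and> bs ! k \<in> B1 \<and> bs ! l \<in> B1 \<and> bs ! k > bs ! l}"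

definition fact_c :: "'b set \<Rightarrow> 'b list \<Rightarrow> nat" where
  "fact_c Bc bs = (\<Prod>b\<in>Bc. fact (count_list bs b))"

definition xvec :: "'b::linorder set \<Rightarrow> 'b list \<Rightarrow> 'b list \<Rightarrow> 'r::comm_ring_1" where
  "xvec B1 bs = (\<lambda>cs. if mset cs = mset bs then (-1) ^ (inv_odd B1 bs + inv_odd B1 cs) else 0)"

definition yvec :: "'b::linorder set \<Rightarrow> 'b set \<Rightarrow> 'b list \<Rightarrow> 'b list \<Rightarrow> 'r::comm_ring_1" where
  "yvec B1 Bc bs = (\<lambda>cs. of_nat (fact_c Bc bs) * xvec B1 bs cs)"

definition Seqs :: "'b set \<Rightarrow> 'b set \<Rightarrow> nat \<Rightarrow> 'b list set" where
  "Seqs B B1 d = {bs \<in> tuples B d. \<forall>b\<in>B1. count_list bs b \<le> 1}"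

text \<open>\<tilde>\<Gamma>^d V = R-span of the y_b (Seq(B,d) is finite).\<close>
definition tGamma :: "'b::linorder set \<Rightarrow> 'b set \<Rightarrow> 'b set \<Rightarrow> nat \<Rightarrow> ('b list \<Rightarrow> 'r::comm_ring_1) set" where
  "tGamma B B1 Bc d = {(\<lambda>cs. \<Sum>bs\<in>Seqs B B1 d. c bs * yvec B1 Bc bs cs) | c. True}"

definition tpar :: "'b set \<Rightarrow> 'b list \<Rightarrow> nat" where
  "tpar B1 cs = length (filter (\<lambda>b. b \<in> B1) cs) mod 2"

definition homog :: "'b set \<Rightarrow> nat \<Rightarrow> ('b list \<Rightarrow> 'r::zero) \<Rightarrow> bool" where
  "homog B1 p z \<longleftrightarrow> (\<forall>cs. z cs \<noteq> 0 \<longrightarrow> tpar B1 cs = p)"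

definition tform_tilde :: "'b set \<Rightarrow> 'b set \<Rightarrow> ('b \<Rightarrow> 'b \<Rightarrow> 'r::comm_ring_1) \<Rightarrow> nat
    \<Rightarrow> ('b list \<Rightarrow> 'r) \<Rightarrow> ('b list \<Rightarrow> 'r) \<Rightarrow> 'r" where
  "tform_tilde B B1 g d z w = (THE r. tform B B1 g d z w = of_nat (fact d) * r)"

end

theory Submission
  imports Defs "HOL-Combinatorics.Multiset_Permutations"
begin
section \<open>Adjacent swaps\<close>

definition swp :: "nat \<Rightarrow> 'a list \<Rightarrow> 'a list" where
  "swp i xs = xs[i := xs ! Suc i, Suc i := xs ! i]"

lemma length_swp[simp]: "length (swp i xs) = length xs"
  by (simp add: swp_def)
lemma swp_Cons_Suc[simp]: "swp (Suc i) (x # xs) = x # swp i xs"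
  by (simp add: swp_def)
lemma swp_0[simp]: "swp 0 (a # b # xs) = b # a # xs"
  by (simp add: swp_def)
lemma mset_swp[simp]: "Suc i < length xs \<Longrightarrow> mset (swp i xs) = mset xs"
  unfolding swp_def by (rule mset_swap) auto
lemma set_swp[simp]: "Suc i < length xs \<Longrightarrow> set (swp i xs) = set xs"
  by (metis mset_swp set_mset_mset)
definition tr :: "nat \<Rightarrow> nat \<Rightarrow> nat" where
  "tr i k = (if k = i then Suc i else if k = Suc i then i else k)"
lemma nth_swp: "k < length xs \<Longrightarrow> Suc i < length xs \<Longrightarrow> swp i xs ! k = xs ! (tr i k)"
  by (auto simp: swp_def tr_def nth_list_update)
lemma swp_same: "xs ! i = xs ! Suc i \<Longrightarrow> swp i xs = xs"
  unfolding swp_def by (metis list_update_id)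
lemma swp_swp: "Suc i < length xs \<Longrightarrow> swp i (swp i xs) = xs"
  by (rule nth_equalityI) (auto simp: nth_swp tr_def)

lemma swp_move:
  assumes "\<forall>xs i. Suc i < length xs \<longrightarrow> f (swp i xs) = f xs"
  shows "f (ys1 @ x # ys2) = f (x # ys1 @ ys2)"
  using assms
proof (induction ys1 arbitrary: f)
  case Nil then show ?case by simp
next
  case (Cons y ys1)
  have "\<forall>xs i. Suc i < length xs \<longrightarrow> (\<lambda>t. f (y # t)) (swp i xs) = (\<lambda>t. f (y # t)) xs"
    using Cons.prems by (metis Suc_less_eq length_Cons swp_Cons_Suc)
  from Cons.IH[OF this] have "f (y # ys1 @ x # ys2) = f (y # x # ys1 @ ys2)" by simp
  also have "\<dots> = f (x # y # ys1 @ ys2)"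
    using Cons.prems[rule_format, of 0 "y # x # ys1 @ ys2"] by simp
  finally show ?case by simp
qed

lemma swp_inv_mset:
  assumes "\<forall>xs i. Suc i < length xs \<longrightarrow> f (swp i xs) = f xs" and "mset xs = mset ys"
  shows "f xs = f ys"
  using assms
proof (induction xs arbitrary: ys f)
  case Nil then show ?case by simp
next
  case (Cons x xs)
  have "x \<in> set ys" using Cons.prems(2) by (metis list.set_intros(1) set_mset_mset)
  then obtain ys1 ys2 where ys: "ys = ys1 @ x # ys2" by (meson split_list)
  have inv': "\<forall>zs i. Suc i < length zs \<longrightarrow> (\<lambda>t. f (x # t)) (swp i zs) = (\<lambda>t. f (x # t)) zs" 
    using Cons.prems(1) by (metis Suc_less_eq length_Cons swp_Cons_Suc)
  have "mset xs = mset (ys1 @ ys2)" using Cons.prems(2) ys by simp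
  from Cons.IH[OF inv' this] have "f (x # xs) = f (x # ys1 @ ys2)" by simp
  also have "\<dots> = f ys" using swp_move[OF Cons.prems(1)] ys by simp
  finally show ?case .
qed

section \<open>Pair counts\<close>

definition pc :: "('a \<Rightarrow> 'a \<Rightarrow> bool) \<Rightarrow> 'a list \<Rightarrow> nat" where
  "pc R xs = card {(k, l). k < l \<and> l < length xs \<and> R (xs ! k) (xs ! l)}"

lemma pc_Nil[simp]: "pc R [] = 0" by (simp add: pc_def)

lemma pc_Cons: "pc R (x # xs) = length (filter (R x) xs) + pc R xs"
proof -
  let ?S = "\<lambda>xs. {(k, l). k < l \<and> l < length xs \<and> R (xs ! k) (xs ! l)}"
  let ?A = "(\<lambda>l. (0::nat, Suc l)) ` {l. l < length xs \<and> R x (xs ! l)}"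
  let ?B = "(\<lambda>(k, l). (Suc k, Suc l)) ` ?S xs"
  have fin: "finite (?S ys)" for ys
    by (rule finite_subset[of _ "{..<length ys} \<times> {..<length ys}"]) auto
  have eq: "?S (x # xs) = ?A \<union> ?B"
  proof
    show "?S (x # xs) \<subseteq> ?A \<union> ?B"
    proof
      fix p assume "p \<in> ?S (x # xs)"
      then obtain k l where p: "p = (k, l)" and kl: "k < l" "l < length (x # xs)" "R ((x # xs) ! k) ((x # xs) ! l)"
        by auto
      then obtain l' where l': "l = Suc l'" by (cases l) auto
      show "p \<in> ?A \<union> ?B"
      proof (cases k)
        case 0 then show ?thesis using kl l' p by auto
      next
        case (Suc k') then show ?thesis using kl l' p by (auto intro!: rev_image_eqI[of "(k', l')"])
      qed
    qed
    show "?A \<union> ?B \<subseteq> ?S (x # xs)" by auto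
  qed
  have "card (?S (x # xs)) = card ?A + card ?B"
    unfolding eq by (rule card_Un_disjoint) (use fin in auto)
  moreover have "card ?A = length (filter (R x) xs)"
    by (subst card_image) (auto simp: inj_on_def length_filter_conv_card)
  moreover have "card ?B = pc R xs"
    unfolding pc_def by (rule card_image) (auto simp: inj_on_def)
  ultimately show ?thesis unfolding pc_def by simp
qed

lemma length_filter_mset: "mset xs = mset ys \<Longrightarrow> length (filter P xs) = length (filter P ys)"
  by (metis mset_filter size_mset)

lemma pc_swp_sym:
  assumes sym: "\<And>a b. R a b = R b a"
  shows "Suc i < length xs \<Longrightarrow> pc R (swp i xs) = pc R xs"
proof (induction xs arbitrary: i)
  case Nil then show ?case by simp
next
  case (Cons x xs)
  show ?case
  proof (cases i)
    case 0
    then obtain y ys where xs: "xs = y # ys" using Cons.prems by (cases xs) auto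
    show ?thesis using 0 xs by (simp add: pc_Cons sym[of x y])
  next
    case (Suc j)
    then have "Suc j < length xs" using Cons.prems by simp
    then show ?thesis using Suc Cons.IH by (simp add: pc_Cons length_filter_mset[OF mset_swp])
  qed
qed

lemma pc_mset_sym:
  assumes sym: "\<And>a b. R a b = R b a" and "mset xs = mset ys"
  shows "pc R xs = pc R ys"
  by (rule swp_inv_mset[where f = "pc R"]) (use pc_swp_sym[OF sym] assms in auto)

lemma inv_odd_pc: "inv_odd B1 xs = pc (\<lambda>a b. a \<in> B1 \<and> b \<in> B1 \<and> b < a) xs"
  by (simp add: inv_odd_def pc_def)

lemma inv_odd_Cons: "inv_odd B1 (x # xs) = length (filter (\<lambda>b. x \<in> B1 \<and> b \<in> B1 \<and> b < x) xs) + inv_odd B1 xs"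
  by (simp add: inv_odd_pc pc_Cons)

lemma tsign_self_pc: "tsign B1 xs xs = pc (\<lambda>a b. a \<in> B1 \<and> b \<in> B1) xs"
proof -
  have "{(k, l). l < k \<and> k < length xs \<and> xs ! k \<in> B1 \<and> xs ! l \<in> B1} =
        (\<lambda>(k, l). (l, k)) ` {(k, l). k < l \<and> l < length xs \<and> xs ! k \<in> B1 \<and> xs ! l \<in> B1}"
    by (auto simp: image_iff)
  moreover have "card \<dots> = card {(k, l). k < l \<and> l < length xs \<and> xs ! k \<in> B1 \<and> xs ! l \<in> B1}"
    by (rule card_image) (auto simp: inj_on_def)
  ultimately show ?thesis by (simp add: tsign_def pc_def)
qed

lemma tsign_self_mset: "mset xs = mset ys \<Longrightarrow> tsign B1 xs xs = tsign B1 ys ys"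
  unfolding tsign_self_pc by (rule pc_mset_sym) auto

lemma sg_swp:
  fixes B1 :: "'b::linorder set"
  shows "Suc i < length xs \<Longrightarrow> ((-1::'r::comm_ring_1) ^ inv_odd B1 (swp i xs)) =
     (if xs ! i \<noteq> xs ! Suc i \<and> xs ! i \<in> B1 \<and> xs ! Suc i \<in> B1 then -1 else 1) * (-1) ^ inv_odd B1 xs"
proof (induction xs arbitrary: i)
  case Nil then show ?case by simp
next
  case (Cons x xs)
  show ?case
  proof (cases i)
    case 0
    then obtain y ys where xs: "xs = y # ys" using Cons.prems by (cases xs) auto
    show ?thesis using 0 xs 
      by (cases "x < y"; cases "y < x") (auto simp: inv_odd_Cons ac_simps)
  next
    case (Suc j)
    then have "Suc j < length xs" using Cons.prems by simp
    then show ?thesis using Suc Cons.IH 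
      by (simp add: inv_odd_Cons length_filter_mset[OF mset_swp] power_add)
  qed
qed

section \<open>Signs, invariance\<close>

definition sg :: "'b::linorder set \<Rightarrow> 'b list \<Rightarrow> 'r::comm_ring_1" where
  "sg B1 xs = (-1) ^ inv_odd B1 xs"
definition esw :: "'b set \<Rightarrow> 'b list \<Rightarrow> nat \<Rightarrow> 'r::comm_ring_1" where
  "esw B1 xs i = (if xs ! i \<in> B1 \<and> xs ! Suc i \<in> B1 then -1 else 1)"
definition invt :: "'b set \<Rightarrow> ('b list \<Rightarrow> 'r::comm_ring_1) \<Rightarrow> bool" where
  "invt B1 z \<longleftrightarrow> (\<forall>cs i. Suc i < length cs \<longrightarrow> z (swp i cs) = esw B1 cs i * z cs)"
definition X :: "'b::linorder set \<Rightarrow> 'b multiset \<Rightarrow> 'b list \<Rightarrow> 'r::comm_ring_1" where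
  "X B1 N cs = (if mset cs = N then sg B1 cs else 0)"
definition cfact :: "'b set \<Rightarrow> 'b multiset \<Rightarrow> nat" where
  "cfact C N = (\<Prod>c\<in>C. fact (count N c))"
definition Y :: "'b::linorder set \<Rightarrow> 'b set \<Rightarrow> 'b multiset \<Rightarrow> 'b list \<Rightarrow> 'r::comm_ring_1" where
  "Y B1 C N cs = of_nat (cfact C N) * X B1 N cs"
definition MS :: "'b set \<Rightarrow> 'b set \<Rightarrow> nat \<Rightarrow> 'b multiset set" where
  "MS B B1 d = mset ` Seqs B B1 d"

lemma sg_sq[simp]: "sg B1 xs * sg B1 xs = 1"
  by (simp add: sg_def flip: power_add)

lemma sg_nz: "sg B1 xs \<noteq> (0::'r::{comm_ring_1})"
proof
  assume "sg B1 xs = (0::'r)"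
  then have "sg B1 xs * sg B1 xs = (0::'r)" by simp
  then show False by simp
qed

lemma esw_sq[simp]: "esw B1 xs i * esw B1 xs i = 1"
  by (simp add: esw_def)

lemma sg_swp': "Suc i < length xs \<Longrightarrow> sg B1 (swp i xs) =
     (if xs ! i \<noteq> xs ! Suc i \<and> xs ! i \<in> B1 \<and> xs ! Suc i \<in> B1 then -1 else 1) * sg B1 xs"
  unfolding sg_def by (rule sg_swp)

lemma invt_const:
  assumes "invt B1 z" "mset xs = mset ys"
  shows "z xs * sg B1 xs = z ys * sg B1 ys"
proof (rule swp_inv_mset[where f = "\<lambda>xs. z xs * sg B1 xs", OF _ assms(2)], intro allI impI)
  fix xs :: "'a list" and i assume i: "Suc i < length xs"
  show "z (swp i xs) * sg B1 (swp i xs) = z xs * sg B1 xs"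
  proof (cases "xs ! i = xs ! Suc i")
    case True then show ?thesis by (simp add: swp_same)
  next
    case False
    have "z (swp i xs) * sg B1 (swp i xs) = (esw B1 xs i * esw B1 xs i) * (z xs * sg B1 xs)"
      using assms(1) i False unfolding invt_def by (simp add: sg_swp' esw_def)
    then show ?thesis by simp
  qed
qed

lemma count_ge2:
  assumes "i < length cs" "j < length cs" "i \<noteq> j" "cs ! i = cs ! j"
  shows "2 \<le> count (mset cs) (cs ! i)"
proof -
  have "count (mset cs) (cs ! i) = card {k. k < length cs \<and> cs ! i = cs ! k}"
    by (metis length_replicate replicate_count_mset_eq_filter_eq length_filter_conv_card)
  moreover have "{i, j} \<subseteq> {k. k < length cs \<and> cs ! i = cs ! k}" using assms by auto
  then have "card {i, j} \<le> card {k. k < length cs \<and> cs ! i = cs ! k}"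
    by (intro card_mono) auto
  ultimately show ?thesis using assms(3) by simp
qed

lemma invt_zero:
  fixes z :: "'b::linorder list \<Rightarrow> 'r::{idom, ring_char_0}"
  assumes "invt B1 z" "b \<in> B1" "2 \<le> count (mset cs) b"
  shows "z cs = 0"
proof -
  define cs' where "cs' = b # b # remove1 b (remove1 b cs)"
  have bin: "b \<in> set cs" using assms(3) by (metis count_mset_0_iff not_numeral_le_zero)
  have "mset cs' = mset cs"
  proof -
    have b1: "b \<in># mset cs - {#b#}" using assms(3) by (simp add: in_diff_count)
    have "mset cs' = add_mset b (add_mset b (mset cs - {#b#} - {#b#}))"
      unfolding cs'_def by (simp only: mset_remove1 mset.simps)
    also have "\<dots> = add_mset b (mset cs - {#b#})" using b1 by (simp only: insert_DiffM)
    also have "\<dots> = mset cs" using bin by (simp only: insert_DiffM set_mset_mset)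
    finally show ?thesis .
  qed
  have "z cs' = esw B1 cs' 0 * z cs'"
    using assms(1) unfolding invt_def by (metis cs'_def length_Cons swp_0 zero_less_Suc Suc_less_eq)
  then have "z cs' = - z cs'" using assms(2) by (simp add: esw_def cs'_def)
  then have "z cs' + z cs' = 0" by (metis add.right_inverse)
  then have "(1 + 1) * z cs' = 0" by (simp add: distrib_right)
  moreover have "(1 + 1 :: 'r) \<noteq> 0" by (metis one_add_one zero_neq_numeral)
  ultimately have "z cs' = 0" by simp
  then have "z cs * sg B1 cs = 0" using invt_const[OF assms(1) \<open>mset cs' = mset cs\<close>] by simp
  then show ?thesis using sg_nz by auto
qed

lemma X_invt:
  assumes "\<forall>b\<in>B1. count N b \<le> 1"
  shows "invt B1 (X B1 N)"
  unfolding invt_def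
proof (intro allI impI)
  fix cs :: "'a list" and i assume i: "Suc i < length cs"
  show "X B1 N (swp i cs) = esw B1 cs i * X B1 N cs"
  proof (cases "mset cs = N")
    case False then show ?thesis using i by (simp add: X_def)
  next
    case True
    show ?thesis
    proof (cases "cs ! i = cs ! Suc i")
      case eq: True
      have "\<not> (cs ! i \<in> B1)"
      proof
        assume "cs ! i \<in> B1"
        moreover have "2 \<le> count N (cs ! i)" using count_ge2[of i cs "Suc i"] i eq True by simp
        ultimately show False using assms by fastforce
      qed
      then show ?thesis using eq by (simp add: swp_same esw_def)
    next
      case False
      then show ?thesis using i True by (simp add: X_def sg_swp' esw_def)
    qed
  qed
qed

lemma tuples_Suc: "tuples B (Suc d) = (\<lambda>(c, cs). c # cs) ` (B \<times> tuples B d)"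
proof (rule set_eqI)
  fix xs show "xs \<in> tuples B (Suc d) \<longleftrightarrow> xs \<in> (\<lambda>(c, cs). c # cs) ` (B \<times> tuples B d)"
    by (cases xs) (auto simp: tuples_def image_iff)
qed

lemma tuples_0[simp]: "tuples B 0 = {[]}"
  by (auto simp: tuples_def)

lemma finite_tuples[simp]: "finite B \<Longrightarrow> finite (tuples B d)"
  unfolding tuples_def by (rule finite_subset[OF _ finite_lists_length_eq[of B d]]) auto

lemma swp_tuples: "cs \<in> tuples B d \<Longrightarrow> Suc i < d \<Longrightarrow> swp i cs \<in> tuples B d"
  by (auto simp: tuples_def)

lemma sum_swp_reindex:
  assumes "Suc i < d"
  shows "(\<Sum>cs\<in>tuples B d. F (swp i cs)) = (\<Sum>cs\<in>tuples B d. F cs)"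
  by (rule sum.reindex_bij_witness[where i = "swp i" and j = "swp i"])
     (use assms in \<open>auto simp: swp_swp swp_tuples tuples_def\<close>)

lemma sum_prod_tuples:
  fixes F :: "nat \<Rightarrow> 'b \<Rightarrow> 'r::comm_semiring_1"
  shows "(\<Sum>cs\<in>tuples B d. \<Prod>k<d. F k (cs ! k)) = (\<Prod>k<d. \<Sum>c\<in>B. F k c)"
proof (induction d arbitrary: F)
  case 0 then show ?case by simp
next
  case (Suc d)
  have inj: "inj_on (\<lambda>(c, cs). c # cs) (B \<times> tuples B d)" by (auto simp: inj_on_def)
  have "(\<Sum>cs\<in>tuples B (Suc d). \<Prod>k<Suc d. F k (cs ! k)) =
        (\<Sum>(c, cs)\<in>B \<times> tuples B d. \<Prod>k<Suc d. F k ((c # cs) ! k))"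
    unfolding tuples_Suc by (subst sum.reindex[OF inj]) (simp add: case_prod_unfold)
  also have "\<dots> = (\<Sum>(c, cs)\<in>B \<times> tuples B d. F 0 c * (\<Prod>k<d. F (Suc k) (cs ! k)))"
    by (intro sum.cong refl) (auto simp del: prod.lessThan_Suc simp add: prod.lessThan_Suc_shift)
  also have "\<dots> = (\<Sum>c\<in>B. \<Sum>cs\<in>tuples B d. F 0 c * (\<Prod>k<d. F (Suc k) (cs ! k)))"
    by (rule sum.cartesian_product[symmetric])
  also have "\<dots> = (\<Sum>c\<in>B. F 0 c) * (\<Prod>k<d. \<Sum>c\<in>B. F (Suc k) c)"
    using Suc.IH[of "\<lambda>k. F (Suc k)"] by (simp add: sum_distrib_right flip: sum_distrib_left)
  also have "\<dots> = (\<Prod>k<Suc d. \<Sum>c\<in>B. F k c)"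
    by (simp del: prod.lessThan_Suc add: prod.lessThan_Suc_shift)
  finally show ?case .
qed

lemma tuples_append: "tuples B (r + n) = (\<lambda>(xs, ys). xs @ ys) ` (tuples B r \<times> tuples B n)"
proof (rule set_eqI)
  fix zs show "zs \<in> tuples B (r + n) \<longleftrightarrow> zs \<in> (\<lambda>(xs, ys). xs @ ys) ` (tuples B r \<times> tuples B n)"
  proof
    assume zs: "zs \<in> tuples B (r + n)"
    then have "(take r zs, drop r zs) \<in> tuples B r \<times> tuples B n"
      by (auto simp: tuples_def dest: in_set_takeD in_set_dropD)
    then show "zs \<in> (\<lambda>(xs, ys). xs @ ys) ` (tuples B r \<times> tuples B n)"
      by (auto intro!: rev_image_eqI)
  qed (auto simp: tuples_def)
qed

lemma sum_tuples_append:
  "(\<Sum>zs\<in>tuples B (r + n). F zs) = (\<Sum>xs\<in>tuples B r. \<Sum>ys\<in>tuples B n. F (xs @ ys))"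
proof -
  have inj: "inj_on (\<lambda>(xs, ys). xs @ ys) (tuples B r \<times> tuples B n)"
    by (auto simp: inj_on_def tuples_def)
  show ?thesis unfolding tuples_append
    by (subst sum.reindex[OF inj]) (simp add: sum.cartesian_product case_prod_unfold)
qed

lemma MS_iff: fixes N :: "'b::linorder multiset" shows "N \<in> MS B B1 d \<longleftrightarrow> set_mset N \<subseteq> B \<and> size N = d \<and> (\<forall>b\<in>B1. count N b \<le> 1)"
proof
  assume "N \<in> MS B B1 d"
  then obtain bs where "bs \<in> Seqs B B1 d" "N = mset bs" by (auto simp: MS_def)
  then show "set_mset N \<subseteq> B \<and> size N = d \<and> (\<forall>b\<in>B1. count N b \<le> 1)"
    by (auto simp: Seqs_def tuples_def count_mset)
next
  assume N: "set_mset N \<subseteq> B \<and> size N = d \<and> (\<forall>b\<in>B1. count N b \<le> 1)"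
  have "sorted_list_of_multiset N \<in> Seqs B B1 d"
    using N by (auto simp: Seqs_def tuples_def simp flip: count_mset size_mset)
  then show "N \<in> MS B B1 d" unfolding MS_def by (rule rev_image_eqI) simp
qed

lemma finite_MS[simp]: "finite B \<Longrightarrow> finite (MS B B1 d)"
  unfolding MS_def Seqs_def by auto

lemma perm_class:
  assumes "set_mset N \<subseteq> B" "size N = d"
  shows "{cs \<in> tuples B d. mset cs = N} = permutations_of_multiset N"
  using assms by (auto simp: tuples_def permutations_of_multiset_def simp flip: size_mset)

lemma sum_class_const:
  assumes "finite B" "set_mset N \<subseteq> B" "size N = d" "mset n = N"
    and "\<And>cs. mset cs = N \<Longrightarrow> F cs = F n"
  shows "(\<Sum>cs\<in>tuples B d. if mset cs = N then F cs else 0) = of_nat (card (permutations_of_multiset N)) * F n"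
proof -
  have "(\<Sum>cs\<in>tuples B d. if mset cs = N then F cs else 0) = (\<Sum>cs\<in>{cs \<in> tuples B d. mset cs = N}. F cs)"
    using assms(1) by (simp add: sum.inter_filter)
  also have "\<dots> = (\<Sum>cs\<in>permutations_of_multiset N. F n)"
    unfolding perm_class[OF assms(2,3)] by (rule sum.cong) (auto simp: assms(5) permutations_of_multiset_def)
  finally show ?thesis by simp
qed

lemma sum_X:
  assumes "finite B" "set_mset N \<subseteq> B" "size N = d" "mset n = N" "invt B1 z"
  shows "(\<Sum>cs\<in>tuples B d. X B1 N cs * z cs) = of_nat (card (permutations_of_multiset N)) * (sg B1 n * z n)"
proof -
  have "(\<Sum>cs\<in>tuples B d. X B1 N cs * z cs) = (\<Sum>cs\<in>tuples B d. if mset cs = N then z cs * sg B1 cs else 0)"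
    by (rule sum.cong) (auto simp: X_def mult.commute)
  also have "\<dots> = of_nat (card (permutations_of_multiset N)) * (z n * sg B1 n)"
    by (rule sum_class_const[OF assms(1-4)]) (use invt_const[OF assms(5)] assms(4) in auto)
  finally show ?thesis by (simp add: mult.commute)
qed

section \<open>Kernel\<close>

definition Gk :: "'b set \<Rightarrow> ('b \<Rightarrow> 'b \<Rightarrow> 'r::comm_ring_1) \<Rightarrow> nat \<Rightarrow> 'b list \<Rightarrow> 'b list \<Rightarrow> 'r" where
  "Gk B1 f d bs cs = (-1) ^ tsign B1 bs cs * (\<Prod>k<d. f (bs ! k) (cs ! k))"
definition pm :: "'b set \<Rightarrow> 'b list \<Rightarrow> 'b list \<Rightarrow> bool" where
  "pm B1 bs cs \<longleftrightarrow> (\<forall>k<length bs. (bs ! k \<in> B1) = (cs ! k \<in> B1))"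
definition evenf :: "'b set \<Rightarrow> 'b set \<Rightarrow> ('b \<Rightarrow> 'b \<Rightarrow> 'r::zero) \<Rightarrow> bool" where
  "evenf B B1 f \<longleftrightarrow> (\<forall>b\<in>B. \<forall>c\<in>B. (b \<in> B1) \<noteq> (c \<in> B1) \<longrightarrow> f b c = 0)"

lemma prod_nonpm:
  fixes f :: "'b \<Rightarrow> 'b \<Rightarrow> 'r::comm_ring_1"
  assumes "evenf B B1 f" "bs \<in> tuples B d" "cs \<in> tuples B d" "\<not> pm B1 bs cs"
  shows "(\<Prod>k<d. f (bs ! k) (cs ! k)) = 0"
proof -
  obtain k where k: "k < length bs" "(bs ! k \<in> B1) \<noteq> (cs ! k \<in> B1)" using assms(4) by (auto simp: pm_def)
  have "bs ! k \<in> B" "cs ! k \<in> B" "k < d" using assms(2,3) k(1) by (auto simp: tuples_def)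
  then have "f (bs ! k) (cs ! k) = 0" using assms(1) k(2) by (auto simp: evenf_def)
  then show ?thesis using \<open>k < d\<close> by (intro prod_zero) auto
qed

lemma tsign_pm:
  assumes "length cs = length bs" "pm B1 bs cs"
  shows "tsign B1 bs cs = tsign B1 bs bs"
proof -
  have "{(k, l). l < k \<and> k < length bs \<and> bs ! k \<in> B1 \<and> cs ! l \<in> B1} =
        {(k, l). l < k \<and> k < length bs \<and> bs ! k \<in> B1 \<and> bs ! l \<in> B1}"
    using assms by (auto simp: pm_def)
  then show ?thesis by (simp add: tsign_def)
qed

lemma tsign_pm_self:
  assumes "length cs = length bs" "pm B1 bs cs"
  shows "tsign B1 cs cs = tsign B1 bs bs"
proof -
  have "{(k, l). l < k \<and> k < length cs \<and> cs ! k \<in> B1 \<and> cs ! l \<in> B1} =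
        {(k, l). l < k \<and> k < length bs \<and> bs ! k \<in> B1 \<and> bs ! l \<in> B1}"
    using assms by (auto simp: pm_def)
  then show ?thesis by (simp add: tsign_def)
qed

lemma pm_sym: "length cs = length bs \<Longrightarrow> pm B1 bs cs \<Longrightarrow> pm B1 cs bs"
  by (auto simp: pm_def)

lemma Gk_closed:
  fixes f :: "'b \<Rightarrow> 'b \<Rightarrow> 'r::comm_ring_1"
  assumes "evenf B B1 f" "bs \<in> tuples B d" "cs \<in> tuples B d"
  shows "Gk B1 f d bs cs = (-1) ^ tsign B1 bs bs * (\<Prod>k<d. f (bs ! k) (cs ! k))"
proof (cases "pm B1 bs cs")
  case True
  then show ?thesis using assms by (simp add: Gk_def tsign_pm tuples_def)
next
  case False
  then show ?thesis using prod_nonpm[OF assms False] by (simp add: Gk_def)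
qed

lemma tr_lt: "k < d \<Longrightarrow> Suc i < d \<Longrightarrow> tr i k < d"
  by (auto simp: tr_def)
lemma tr_tr: "tr i (tr i k) = k"
  by (auto simp: tr_def)

lemma prod_tr:
  fixes F :: "nat \<Rightarrow> 'r::comm_monoid_mult"
  assumes "Suc i < d"
  shows "(\<Prod>k<d. F (tr i k)) = (\<Prod>k<d. F k)"
  by (rule prod.reindex_bij_witness[where i = "tr i" and j = "tr i"])
     (use assms in \<open>auto simp: tr_tr tr_lt\<close>)

lemma Gk_swp:
  fixes f :: "'b \<Rightarrow> 'b \<Rightarrow> 'r::comm_ring_1"
  assumes "evenf B B1 f" "bs \<in> tuples B d" "cs \<in> tuples B d" "Suc i < d"
  shows "Gk B1 f d (swp i bs) (swp i cs) = Gk B1 f d bs cs"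
proof -
  have l: "length bs = d" "length cs = d" using assms by (auto simp: tuples_def)
  have "Gk B1 f d (swp i bs) (swp i cs) = (-1) ^ tsign B1 (swp i bs) (swp i bs) * (\<Prod>k<d. f (swp i bs ! k) (swp i cs ! k))"
    using Gk_closed[OF assms(1) swp_tuples swp_tuples] assms by blast
  also have "tsign B1 (swp i bs) (swp i bs) = tsign B1 bs bs"
    using assms(4) l by (intro tsign_self_mset) simp
  also have "(\<Prod>k<d. f (swp i bs ! k) (swp i cs ! k)) = (\<Prod>k<d. f (bs ! tr i k) (cs ! tr i k))"
    using assms(4) l by (intro prod.cong) (auto simp: nth_swp)
  also have "\<dots> = (\<Prod>k<d. f (bs ! k) (cs ! k))"
    by (rule prod_tr[OF assms(4), where F = "\<lambda>k. f (bs ! k) (cs ! k)"])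
  finally show ?thesis using Gk_closed[OF assms(1-3)] by simp
qed

lemma Gk_nz_esw:
  fixes f :: "'b \<Rightarrow> 'b \<Rightarrow> 'r::comm_ring_1"
  assumes "evenf B B1 f" "bs \<in> tuples B d" "cs \<in> tuples B d" "Suc i < d" "Gk B1 f d bs cs \<noteq> 0"
  shows "esw B1 bs i = (esw B1 cs i :: 'r)"
proof -
  have "(\<Prod>k<d. f (bs ! k) (cs ! k)) \<noteq> 0" using assms(5) by (auto simp: Gk_def)
  then have "pm B1 bs cs" using prod_nonpm[OF assms(1-3)] by blast
  then show ?thesis using assms(2,4) by (auto simp: pm_def esw_def tuples_def)
qed

definition wv :: "'b set \<Rightarrow> 'b set \<Rightarrow> ('b \<Rightarrow> 'b \<Rightarrow> 'r::comm_ring_1) \<Rightarrow> nat \<Rightarrow> ('b list \<Rightarrow> 'r) \<Rightarrow> 'b list \<Rightarrow> 'r" where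
  "wv B B1 f d z cs = (if cs \<in> tuples B d then \<Sum>bs\<in>tuples B d. z bs * Gk B1 f d bs cs else 0)"
definition uv :: "'b set \<Rightarrow> 'b set \<Rightarrow> ('b \<Rightarrow> 'b \<Rightarrow> 'r::comm_ring_1) \<Rightarrow> nat \<Rightarrow> ('b list \<Rightarrow> 'r) \<Rightarrow> 'b list \<Rightarrow> 'r" where
  "uv B B1 f d z bs = (if bs \<in> tuples B d then \<Sum>cs\<in>tuples B d. Gk B1 f d bs cs * z cs else 0)"

lemma swp_tuples_iff: "Suc i < length cs \<Longrightarrow> swp i cs \<in> tuples B d \<longleftrightarrow> cs \<in> tuples B d"
  by (auto simp: tuples_def)

lemma invt_wv:
  fixes f :: "'b \<Rightarrow> 'b \<Rightarrow> 'r::comm_ring_1"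
  assumes "evenf B B1 f" "invt B1 z"
  shows "invt B1 (wv B B1 f d z)"
  unfolding invt_def
proof (intro allI impI)
  fix cs :: "'b list" and i assume i: "Suc i < length cs"
  show "wv B B1 f d z (swp i cs) = esw B1 cs i * wv B B1 f d z cs"
  proof (cases "cs \<in> tuples B d")
    case False then show ?thesis using i by (simp add: wv_def swp_tuples_iff)
  next
    case cs: True
    then have id: "Suc i < d" using i by (simp add: tuples_def)
    have "(\<Sum>bs\<in>tuples B d. z bs * Gk B1 f d bs (swp i cs)) =
          (\<Sum>bs\<in>tuples B d. z (swp i bs) * Gk B1 f d (swp i bs) (swp i cs))"
      by (rule sum_swp_reindex[OF id, symmetric])
    also have "\<dots> = (\<Sum>bs\<in>tuples B d. esw B1 bs i * z bs * Gk B1 f d bs cs)"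
      using assms(2) cs id by (intro sum.cong refl) (simp add: Gk_swp[OF assms(1)] invt_def tuples_def)
    also have "\<dots> = (\<Sum>bs\<in>tuples B d. esw B1 cs i * (z bs * Gk B1 f d bs cs))"
    proof (intro sum.cong refl)
      fix bs assume bs: "bs \<in> tuples B d"
      show "esw B1 bs i * z bs * Gk B1 f d bs cs = esw B1 cs i * (z bs * Gk B1 f d bs cs)"
        using Gk_nz_esw[OF assms(1) bs cs id] by (cases "Gk B1 f d bs cs = 0") auto
    qed
    finally show ?thesis using cs id by (simp add: wv_def swp_tuples sum_distrib_left)
  qed
qed

lemma invt_uv:
  fixes f :: "'b \<Rightarrow> 'b \<Rightarrow> 'r::comm_ring_1"
  assumes "evenf B B1 f" "invt B1 z"
  shows "invt B1 (uv B B1 f d z)"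
  unfolding invt_def
proof (intro allI impI)
  fix bs :: "'b list" and i assume i: "Suc i < length bs"
  show "uv B B1 f d z (swp i bs) = esw B1 bs i * uv B B1 f d z bs"
  proof (cases "bs \<in> tuples B d")
    case False then show ?thesis using i by (simp add: uv_def swp_tuples_iff)
  next
    case bs: True
    then have id: "Suc i < d" using i by (simp add: tuples_def)
    have "(\<Sum>cs\<in>tuples B d. Gk B1 f d (swp i bs) cs * z cs) =
          (\<Sum>cs\<in>tuples B d. Gk B1 f d (swp i bs) (swp i cs) * z (swp i cs))"
      by (rule sum_swp_reindex[OF id, symmetric])
    also have "\<dots> = (\<Sum>cs\<in>tuples B d. esw B1 cs i * Gk B1 f d bs cs * z cs)"
      using assms(2) bs id by (intro sum.cong refl) (simp add: Gk_swp[OF assms(1)] invt_def tuples_def)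
    also have "\<dots> = (\<Sum>cs\<in>tuples B d. esw B1 bs i * (Gk B1 f d bs cs * z cs))"
    proof (intro sum.cong refl)
      fix cs assume cs: "cs \<in> tuples B d"
      show "esw B1 cs i * Gk B1 f d bs cs * z cs = esw B1 bs i * (Gk B1 f d bs cs * z cs)"
        using Gk_nz_esw[OF assms(1) bs cs id] by (cases "Gk B1 f d bs cs = 0") auto
    qed
    finally show ?thesis using bs id by (simp add: uv_def swp_tuples sum_distrib_left)
  qed
qed

lemma Gk_inverse:
  fixes f h :: "'b \<Rightarrow> 'b \<Rightarrow> 'r::comm_ring_1"
  assumes "finite B" "evenf B B1 f" "evenf B B1 h"
    and inv: "\<forall>b\<in>B. \<forall>a\<in>B. (\<Sum>c\<in>B. f b c * h c a) = (if b = a then 1 else 0)"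
    and bs: "bs \<in> tuples B d" and as: "as \<in> tuples B d"
  shows "(\<Sum>cs\<in>tuples B d. Gk B1 f d bs cs * Gk B1 h d cs as) = (if bs = as then 1 else 0)"
proof -
  have "(\<Sum>cs\<in>tuples B d. Gk B1 f d bs cs * Gk B1 h d cs as) =
        (\<Sum>cs\<in>tuples B d. \<Prod>k<d. f (bs ! k) (cs ! k) * h (cs ! k) (as ! k))"
  proof (intro sum.cong refl)
    fix cs assume cs: "cs \<in> tuples B d"
    have l: "length bs = d" "length cs = d" "length as = d" using bs cs as by (auto simp: tuples_def)
    show "Gk B1 f d bs cs * Gk B1 h d cs as = (\<Prod>k<d. f (bs ! k) (cs ! k) * h (cs ! k) (as ! k))"
    proof (cases "pm B1 bs cs \<and> pm B1 cs as")
      case True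
      then have "tsign B1 cs cs = tsign B1 bs bs" using l by (intro tsign_pm_self) auto
      then show ?thesis using True l Gk_closed[OF assms(2) bs cs] Gk_closed[OF assms(3) cs as]
        by (simp add: prod.distrib mult_ac flip: power_add)
    next
      case False
      then have "(\<Prod>k<d. f (bs ! k) (cs ! k)) = 0 \<or> (\<Prod>k<d. h (cs ! k) (as ! k)) = 0"
        using prod_nonpm[OF assms(2) bs cs] prod_nonpm[OF assms(3) cs as] by blast
      then show ?thesis by (auto simp: Gk_def prod.distrib)
    qed
  qed
  also have "\<dots> = (\<Prod>k<d. \<Sum>c\<in>B. f (bs ! k) c * h c (as ! k))"
    by (rule sum_prod_tuples)
  also have "\<dots> = (\<Prod>k<d. if bs ! k = as ! k then 1 else 0)"
  proof (intro prod.cong refl)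
    fix k assume "k \<in> {..<d}"
    then have "bs ! k \<in> B" "as ! k \<in> B" using bs as by (auto simp: tuples_def)
    then show "(\<Sum>c\<in>B. f (bs ! k) c * h c (as ! k)) = (if bs ! k = as ! k then 1 else 0)"
      using inv by blast
  qed
  also have "\<dots> = (if bs = as then 1 else 0)"
  proof (cases "bs = as")
    case True then show ?thesis by simp
  next
    case False
    then obtain k where "k < d" "bs ! k \<noteq> as ! k"
      using bs as by (metis (mono_tags, lifting) mem_Collect_eq nth_equalityI tuples_def)
    then show ?thesis using False by (intro trans[OF prod_zero]) auto
  qed
  finally show ?thesis .
qed

lemma tform_uv: "tform B B1 f d z w = (\<Sum>bs\<in>tuples B d. z bs * uv B B1 f d w bs)"
  by (simp add: tform_def uv_def Gk_def sum_distrib_left mult_ac)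

lemma tform_wv: "tform B B1 f d z w = (\<Sum>cs\<in>tuples B d. wv B B1 f d z cs * w cs)"
  unfolding tform_def wv_def Gk_def
  by (subst sum.swap) (simp add: sum_distrib_left mult_ac)

lemma tform_smult: "tform B B1 f d (\<lambda>cs. a * z cs) (\<lambda>cs. b * w cs) = a * b * tform B B1 f d z w"
  by (simp add: tform_def sum_distrib_left mult_ac)

section \<open>Inverse identity\<close>

lemma factM:
  fixes A C B1 B :: "'b::linorder set"
  assumes finB: "finite B" and Bdef: "B = A \<union> C \<union> B1"
    and disj: "A \<inter> C = {}" "A \<inter> B1 = {}" "C \<inter> B1 = {}"
    and M: "M \<in> MS B B1 d"
  shows "cfact A M * cfact C M * card (permutations_of_multiset M) = fact d"
proof -
  have M': "set_mset M \<subseteq> B" "size M = d" "\<forall>b\<in>B1. count M b \<le> 1" using M by (auto simp: MS_iff)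
  have fin: "finite A" "finite C" "finite B1" using finB Bdef by auto
  have "(\<Prod>x\<in>set_mset M. fact (count M x)) = (\<Prod>x\<in>B. fact (count M x) :: nat)"
    using M' finB by (intro prod.mono_neutral_left) (auto simp: not_in_iff)
  also have "\<dots> = (\<Prod>x\<in>A. fact (count M x)) * (\<Prod>x\<in>C. fact (count M x)) * (\<Prod>x\<in>B1. fact (count M x))"
    unfolding Bdef using fin disj by (simp add: prod.union_disjoint Int_Un_distrib2)
  also have "(\<Prod>x\<in>B1. fact (count M x) :: nat) = 1"
  proof (rule prod.neutral, intro ballI)
    fix x assume "x \<in> B1"
    then have "count M x \<le> 1" using M' by auto
    then show "fact (count M x) = (1::nat)" by (cases "count M x") auto
  qed
  finally have "(\<Prod>x\<in>set_mset M. fact (count M x)) = cfact A M * cfact C M" by (simp add: cfact_def)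
  then show ?thesis using card_permutations_of_multiset_aux[of M] M' by (simp add: mult_ac)
qed

lemma Y_eq: "Y B1 C N = (\<lambda>cs. of_nat (cfact C N) * X B1 N cs)"
  by (simp add: Y_def fun_eq_iff)

lemma MS_valid: fixes N :: "'b::linorder multiset" shows "N \<in> MS B B1 d \<Longrightarrow> \<forall>b\<in>B1. count N b \<le> 1"
  by (simp add: MS_iff)

lemma sum_tuples_MS:
  fixes w u :: "'b::linorder list \<Rightarrow> 'r::{idom, ring_char_0}"
  assumes finB: "finite B" and w: "invt B1 w" and u: "invt B1 u"
  shows "(\<Sum>cs\<in>tuples B d. w cs * u cs) =
    (\<Sum>N\<in>MS B B1 d. of_nat (card (permutations_of_multiset N)) *
         (w (sorted_list_of_multiset N) * u (sorted_list_of_multiset N)))"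
proof -
  let ?T = "mset ` tuples B d"
  let ?G = "\<lambda>N. of_nat (card (permutations_of_multiset N)) *
         (w (sorted_list_of_multiset N) * u (sorted_list_of_multiset N))"
  have "(\<Sum>cs\<in>tuples B d. w cs * u cs) = (\<Sum>N\<in>?T. \<Sum>cs\<in>{cs \<in> tuples B d. mset cs = N}. w cs * u cs)"
    using finB by (intro sum.group[symmetric]) auto
  also have "\<dots> = (\<Sum>N\<in>?T. if N \<in> MS B B1 d then ?G N else 0)"
  proof (intro sum.cong refl)
    fix N assume "N \<in> ?T"
    then obtain cs0 where cs0: "cs0 \<in> tuples B d" "N = mset cs0" by auto
    then have NB: "set_mset N \<subseteq> B" "size N = d" by (auto simp: tuples_def)
    have "(\<Sum>cs\<in>{cs \<in> tuples B d. mset cs = N}. w cs * u cs) =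
          (\<Sum>cs\<in>tuples B d. if mset cs = N then w cs * u cs else 0)"
      using finB by (simp add: sum.inter_filter)
    also have "\<dots> = (if N \<in> MS B B1 d then ?G N else 0)"
    proof (cases "N \<in> MS B B1 d")
      case True
      let ?n = "sorted_list_of_multiset N"
      have "(\<Sum>cs\<in>tuples B d. if mset cs = N then w cs * u cs else 0) =
            of_nat (card (permutations_of_multiset N)) * (w ?n * u ?n)"
      proof (rule sum_class_const[OF finB NB])
        show "mset ?n = N" by simp
        fix cs assume cs: "mset cs = N"
        have "w cs * u cs = (w cs * sg B1 cs) * (u cs * sg B1 cs)" by (simp add: mult_ac)
        also have "\<dots> = (w ?n * sg B1 ?n) * (u ?n * sg B1 ?n)"
          using invt_const[OF w, of cs ?n] invt_const[OF u, of cs ?n] cs by simp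
        also have "\<dots> = w ?n * u ?n" by (simp add: mult_ac)
        finally show "w cs * u cs = w ?n * u ?n" .
      qed
      then show ?thesis using True by simp
    next
      case False
      then obtain b where b: "b \<in> B1" "2 \<le> count N b" using NB by (auto simp: MS_iff not_le)
      have "(\<Sum>cs\<in>tuples B d. if mset cs = N then w cs * u cs else 0) = 0"
        by (rule sum.neutral) (use invt_zero[OF w b(1)] b(2) in auto)
      then show ?thesis using False by simp
    qed
    finally show "(\<Sum>cs\<in>{cs \<in> tuples B d. mset cs = N}. w cs * u cs) = (if N \<in> MS B B1 d then ?G N else 0)" .
  qed
  also have "\<dots> = (\<Sum>N\<in>MS B B1 d. ?G N)"
  proof -
    have sub: "MS B B1 d \<subseteq> ?T" by (auto simp: MS_def Seqs_def)
    have "(\<Sum>N\<in>?T. if N \<in> MS B B1 d then ?G N else 0) = (\<Sum>N\<in>MS B B1 d. if N \<in> MS B B1 d then ?G N else 0)"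
      using finB sub by (intro sum.mono_neutral_right) auto
    then show ?thesis by simp
  qed
  finally show ?thesis .
qed

lemma sum_XX:
  fixes M L :: "'b::linorder multiset"
  assumes finB: "finite B" and M: "M \<in> MS B B1 d"
  shows "(\<Sum>bs\<in>tuples B d. X B1 M bs * X B1 L bs) =
     (if M = L then of_nat (card (permutations_of_multiset M)) else (0::'r::comm_ring_1))"
proof -
  have MB: "set_mset M \<subseteq> B" "size M = d" using M by (auto simp: MS_iff)
  have "(\<Sum>bs\<in>tuples B d. X B1 M bs * X B1 L bs) =
        (\<Sum>bs\<in>tuples B d. if mset bs = M then (if M = L then 1 else 0) else (0::'r))"
    by (intro sum.cong refl) (auto simp: X_def)
  also have "\<dots> = of_nat (card (permutations_of_multiset M)) * (if M = L then 1 else 0)"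
    by (rule sum_class_const[OF finB MB, of "sorted_list_of_multiset M"]) auto
  finally show ?thesis by simp
qed

lemma sum_wu:
  fixes f h :: "'b::linorder \<Rightarrow> 'b \<Rightarrow> 'r::{idom, ring_char_0}"
  assumes finB: "finite B" and evf: "evenf B B1 f" and evh: "evenf B B1 h"
    and inv: "\<forall>b\<in>B. \<forall>a\<in>B. (\<Sum>c\<in>B. f b c * h c a) = (if b = a then 1 else 0)"
    and M: "M \<in> MS B B1 d"
  shows "(\<Sum>cs\<in>tuples B d. wv B B1 f d (X B1 M) cs * uv B B1 h d (X B1 L) cs) =
     (if M = L then of_nat (card (permutations_of_multiset M)) else 0)"
proof -
  let ?T = "tuples B d"
  have "(\<Sum>cs\<in>?T. wv B B1 f d (X B1 M) cs * uv B B1 h d (X B1 L) cs) =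
        (\<Sum>cs\<in>?T. \<Sum>bs\<in>?T. \<Sum>as\<in>?T. X B1 M bs * X B1 L as * (Gk B1 f d bs cs * Gk B1 h d cs as))"
  proof (intro sum.cong refl)
    fix cs assume cs: "cs \<in> ?T"
    have "wv B B1 f d (X B1 M) cs * uv B B1 h d (X B1 L) cs =
      (\<Sum>bs\<in>?T. X B1 M bs * Gk B1 f d bs cs) * (\<Sum>as\<in>?T. Gk B1 h d cs as * X B1 L as)"
      using cs by (simp add: wv_def uv_def)
    also have "\<dots> = (\<Sum>bs\<in>?T. \<Sum>as\<in>?T. (X B1 M bs * Gk B1 f d bs cs) * (Gk B1 h d cs as * X B1 L as))"
      by (rule sum_product)
    finally show "wv B B1 f d (X B1 M) cs * uv B B1 h d (X B1 L) cs =
      (\<Sum>bs\<in>?T. \<Sum>as\<in>?T. X B1 M bs * X B1 L as * (Gk B1 f d bs cs * Gk B1 h d cs as))"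
      by (simp add: mult_ac)
  qed
  also have "\<dots> = (\<Sum>bs\<in>?T. \<Sum>as\<in>?T. \<Sum>cs\<in>?T. X B1 M bs * X B1 L as * (Gk B1 f d bs cs * Gk B1 h d cs as))"
    by (subst sum.swap) (subst (2) sum.swap, rule refl)
  also have "\<dots> = (\<Sum>bs\<in>?T. \<Sum>as\<in>?T. X B1 M bs * X B1 L as * (if bs = as then 1 else 0))"
    by (intro sum.cong refl) (simp add: Gk_inverse[OF finB evf evh inv] flip: sum_distrib_left)
  also have "\<dots> = (\<Sum>bs\<in>?T. X B1 M bs * X B1 L bs)"
    using finB by (intro sum.cong refl) (simp add: if_distrib[of "\<lambda>x. _ * x"] cong: if_cong)
  also have "\<dots> = (if M = L then of_nat (card (permutations_of_multiset M)) else 0)"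
    by (rule sum_XX[OF finB M])
  finally show ?thesis .
qed

lemma ident:
  fixes A C B1 B :: "'b::linorder set" and f h :: "'b \<Rightarrow> 'b \<Rightarrow> 'r::{idom, ring_char_0}"
  assumes finB: "finite B" and Bdef: "B = A \<union> C \<union> B1"
    and disj: "A \<inter> C = {}" "A \<inter> B1 = {}" "C \<inter> B1 = {}"
    and evf: "evenf B B1 f" and evh: "evenf B B1 h"
    and inv: "\<forall>b\<in>B. \<forall>a\<in>B. (\<Sum>c\<in>B. f b c * h c a) = (if b = a then 1 else 0)"
    and M: "M \<in> MS B B1 d" and L: "L \<in> MS B B1 d"
  shows "(\<Sum>N\<in>MS B B1 d. tform B B1 f d (Y B1 C M) (Y B1 C N) * tform B B1 h d (Y B1 A N) (Y B1 A L))
       = (if M = L then of_nat (fact d) ^ 2 else 0)"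
proof -
  let ?w = "wv B B1 f d (X B1 M)" and ?u = "uv B B1 h d (X B1 L)"
  let ?p = "\<lambda>N. of_nat (card (permutations_of_multiset N)) :: 'r"
  let ?n = "\<lambda>N. sorted_list_of_multiset N"
  have wi: "invt B1 ?w" by (rule invt_wv[OF evf X_invt[OF MS_valid[OF M]]])
  have ui: "invt B1 ?u" by (rule invt_uv[OF evh X_invt[OF MS_valid[OF L]]])
  have "(\<Sum>N\<in>MS B B1 d. tform B B1 f d (Y B1 C M) (Y B1 C N) * tform B B1 h d (Y B1 A N) (Y B1 A L))
      = (\<Sum>N\<in>MS B B1 d. of_nat (cfact C M) * of_nat (cfact A L) * of_nat (fact d) * (?p N * (?w (?n N) * ?u (?n N))))"
  proof (intro sum.cong refl)
    fix N assume N: "N \<in> MS B B1 d"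
    have NB: "set_mset N \<subseteq> B" "size N = d" using N by (auto simp: MS_iff)
    have e1: "tform B B1 f d (Y B1 C M) (Y B1 C N) = of_nat (cfact C M) * of_nat (cfact C N) * (?p N * (sg B1 (?n N) * ?w (?n N)))"
      unfolding Y_eq tform_smult tform_wv
      using sum_X[OF finB NB _ wi, of "?n N"] by (simp add: mult.commute)
    have e2: "tform B B1 h d (Y B1 A N) (Y B1 A L) = of_nat (cfact A N) * of_nat (cfact A L) * (?p N * (sg B1 (?n N) * ?u (?n N)))"
      unfolding Y_eq tform_smult tform_uv
      using sum_X[OF finB NB _ ui, of "?n N"] by simp
    have fd: "of_nat (cfact A N) * of_nat (cfact C N) * ?p N = (of_nat (fact d) :: 'r)"
      using factM[OF finB Bdef disj N] by (metis of_nat_mult of_nat_fact)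
    have "tform B B1 f d (Y B1 C M) (Y B1 C N) * tform B B1 h d (Y B1 A N) (Y B1 A L) =
       of_nat (cfact C M) * of_nat (cfact A L) * (of_nat (cfact A N) * of_nat (cfact C N) * ?p N) * (?p N * ((sg B1 (?n N) * sg B1 (?n N)) * (?w (?n N) * ?u (?n N))))"
      unfolding e1 e2 by (simp add: mult_ac)
    also have "\<dots> = of_nat (cfact C M) * of_nat (cfact A L) * of_nat (fact d) * (?p N * (?w (?n N) * ?u (?n N)))"
      unfolding fd by simp
    finally show "tform B B1 f d (Y B1 C M) (Y B1 C N) * tform B B1 h d (Y B1 A N) (Y B1 A L) =
       of_nat (cfact C M) * of_nat (cfact A L) * of_nat (fact d) * (?p N * (?w (?n N) * ?u (?n N)))" .
  qed
  also have "\<dots> = of_nat (cfact C M) * of_nat (cfact A L) * of_nat (fact d) * (\<Sum>N\<in>MS B B1 d. ?p N * (?w (?n N) * ?u (?n N)))"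
    by (simp add: sum_distrib_left)
  also have "(\<Sum>N\<in>MS B B1 d. ?p N * (?w (?n N) * ?u (?n N))) = (\<Sum>cs\<in>tuples B d. ?w cs * ?u cs)"
    by (rule sum_tuples_MS[OF finB wi ui, symmetric])
  also have "\<dots> = (if M = L then ?p M else 0)"
    by (rule sum_wu[OF finB evf evh inv M])
  also have "of_nat (cfact C M) * of_nat (cfact A L) * of_nat (fact d) * (if M = L then ?p M else 0) =
      (if M = L then of_nat (fact d) ^ 2 else (0::'r))"
  proof (cases "M = L")
    case True
    have "of_nat (cfact A M) * of_nat (cfact C M) * ?p M = (of_nat (fact d) :: 'r)"
      using factM[OF finB Bdef disj M] by (metis of_nat_mult of_nat_fact)
    then show ?thesis using True by (simp add: power2_eq_square mult_ac)
  qed simp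
  finally show ?thesis .
qed

section \<open>Divisibility\<close>

definition Fs :: "'b::linorder set \<Rightarrow> 'b set \<Rightarrow> ('b \<Rightarrow> 'b \<Rightarrow> 'r::comm_ring_1) \<Rightarrow> 'b list \<Rightarrow> 'b multiset \<Rightarrow> 'r" where
  "Fs B B1 f m L = (\<Sum>cs\<in>tuples B (length m). (if mset cs = L then sg B1 cs else 0) * (\<Prod>k<length m. f (m ! k) (cs ! k)))"

lemma sum_tuples_Suc:
  "(\<Sum>cs\<in>tuples B (Suc n). F cs) = (\<Sum>c\<in>B. \<Sum>cs\<in>tuples B n. F (c # cs))"
proof -
  have inj: "inj_on (\<lambda>(c, cs). c # cs) (B \<times> tuples B n)" by (auto simp: inj_on_def)
  show ?thesis unfolding tuples_Suc
    by (subst sum.reindex[OF inj]) (simp add: sum.cartesian_product case_prod_unfold)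
qed

lemma add_mset_eq_iff': "(add_mset c M = L) \<longleftrightarrow> (c \<in># L \<and> M = L - {#c#})"
  by (metis add_mset_remove_trivial insert_DiffM union_single_eq_member)

lemma sg_Cons: "sg B1 (c # cs) = (-1) ^ (length (filter (\<lambda>b. c \<in> B1 \<and> b \<in> B1 \<and> b < c) cs)) * sg B1 cs"
  by (simp add: sg_def inv_odd_Cons power_add)

lemma cfact_diff_dvd: "cfact C (L - N) dvd cfact C L"
  unfolding cfact_def by (intro prod_dvd_prod fact_dvd) simp

lemma cfact_sub_dvd:
  assumes "N \<subseteq># L"
  shows "cfact C N * cfact C (L - N) dvd cfact C L"
  unfolding cfact_def prod.distrib[symmetric]
proof (intro prod_dvd_prod)
  fix c
  have "count N c \<le> count L c" using assms by (simp add: subseteq_mset_def)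
  then have "fact (count N c) * fact (count L c - count N c) dvd (fact (count N c + (count L c - count N c)) :: nat)"
    by (metis fact_fact_dvd_fact)
  then show "fact (count N c) * fact (count (L - N) c) dvd (fact (count L c) :: nat)"
    using \<open>count N c \<le> count L c\<close> by simp
qed

lemma cfact_add_notin: "x \<notin> A \<Longrightarrow> cfact A (add_mset x M) = cfact A M"
  unfolding cfact_def by (intro prod.cong refl) auto

lemma cfact_empty[simp]: "cfact A {#} = 1"
  by (simp add: cfact_def)

lemma cfact_rep:
  assumes "finite A" "x \<in> A" "x \<notin># M"
  shows "cfact A (replicate_mset r x + M) = fact r * cfact A M"
proof -
  have "cfact A (replicate_mset r x + M) = fact (count (replicate_mset r x + M) x) *
          (\<Prod>a\<in>A - {x}. fact (count (replicate_mset r x + M) a))"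
    unfolding cfact_def using assms by (simp add: prod.remove)
  also have "(\<Prod>a\<in>A - {x}. fact (count (replicate_mset r x + M) a)) = (\<Prod>a\<in>A - {x}. fact (count M a))"
    by (intro prod.cong refl) auto
  also have "cfact A M = fact (count M x) * (\<Prod>a\<in>A - {x}. fact (count M a))"
    unfolding cfact_def using assms by (simp add: prod.remove)
  ultimately show ?thesis using assms(3) by (simp add: not_in_iff)
qed

lemma perm_card_cfact:
  assumes "finite C" "set_mset N \<subseteq> C"
  shows "card (permutations_of_multiset N) * cfact C N = fact (size N)"
proof -
  have "(\<Prod>x\<in>set_mset N. fact (count N x)) = cfact C N"
    unfolding cfact_def using assms by (intro prod.mono_neutral_left) (auto simp: not_in_iff)
  then show ?thesis using card_permutations_of_multiset_aux[of N] by simp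
qed

lemma prod_nth_mset:
  fixes F :: "'a \<Rightarrow> 'r::comm_monoid_mult"
  assumes "mset xs = mset ys"
  shows "(\<Prod>k<length xs. F (xs ! k)) = (\<Prod>k<length ys. F (ys ! k))"
proof -
  have e: "(\<Prod>k<length zs. F (zs ! k)) = prod_mset (image_mset F (mset zs))" for zs
  proof -
    have "(\<Prod>k<length zs. F (zs ! k)) = prod_list (map F zs)"
      by (simp add: prod.list_conv_set_nth lessThan_atLeast0)
    also have "\<dots> = prod_mset (image_mset F (mset zs))" by (metis mset_map prod_mset_prod_list)
    finally show ?thesis .
  qed
  show ?thesis unfolding e assms ..
qed

lemma inv_odd_append_even: "set xs \<inter> B1 = {} \<Longrightarrow> inv_odd B1 (xs @ ys) = inv_odd B1 ys"
  by (induction xs) (auto simp: inv_odd_Cons)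

lemma prod_split_add:
  fixes g :: "nat \<Rightarrow> 'r::comm_monoid_mult"
  shows "(\<Prod>k<r + n. g k) = (\<Prod>k<r. g k) * (\<Prod>k<n. g (r + k))"
  by (induction n) (simp_all add: mult_ac)

lemma notin_dropWhile_sorted:
  fixes x :: "'a::linorder"
  shows "sorted (x # t) \<Longrightarrow> x \<notin> set (dropWhile (\<lambda>y. y = x) t)"
proof (induction t)
  case Nil then show ?case by simp
next
  case (Cons y t)
  show ?case
  proof (cases "y = x")
    case True
    then have "sorted (x # t)" using Cons.prems by simp
    then show ?thesis using Cons.IH True by simp
  next
    case False
    then have "x < y" using Cons.prems by (auto simp: less_le)
    moreover have "\<forall>z\<in>set t. y \<le> z" using Cons.prems by simp
    ultimately show ?thesis using False by auto
  qed
qed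

lemma add_eq_iff_sub: "(N + M = L) \<longleftrightarrow> (N \<subseteq># L \<and> M = L - N)"
  by (metis add_diff_cancel_left' mset_subset_eq_add_left subset_mset.add_diff_inverse)

lemma Fs_Cons:
  fixes f :: "'b::linorder \<Rightarrow> 'b \<Rightarrow> 'r::comm_ring_1"
  shows "Fs B B1 f (x # m') L = (\<Sum>c\<in>B. if c \<in># L then f x c *
      (-1) ^ length (filter (\<lambda>b. c \<in> B1 \<and> b \<in> B1 \<and> b < c) (sorted_list_of_multiset (L - {#c#}))) *
      Fs B B1 f m' (L - {#c#}) else 0)"
proof -
  let ?n = "length m'"
  let ?s = "\<lambda>c. (-1::'r) ^ length (filter (\<lambda>b. c \<in> B1 \<and> b \<in> B1 \<and> b < c) (sorted_list_of_multiset (L - {#c#})))"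
  have "Fs B B1 f (x # m') L = (\<Sum>c\<in>B. \<Sum>cs\<in>tuples B ?n.
      (if mset (c # cs) = L then sg B1 (c # cs) else 0) * (\<Prod>k<Suc ?n. f ((x # m') ! k) ((c # cs) ! k)))"
    unfolding Fs_def by (simp add: sum_tuples_Suc del: prod.lessThan_Suc)
  also have "\<dots> = (\<Sum>c\<in>B. if c \<in># L then f x c * ?s c * Fs B B1 f m' (L - {#c#}) else 0)"
  proof (intro sum.cong refl)
    fix c
    have t: "(if mset (c # cs) = L then sg B1 (c # cs) else 0) * (\<Prod>k<Suc ?n. f ((x # m') ! k) ((c # cs) ! k))
       = (if c \<in># L then f x c * ?s c * ((if mset cs = L - {#c#} then sg B1 cs else 0) * (\<Prod>k<?n. f (m' ! k) (cs ! k))) else 0)"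
      for cs
    proof (cases "c \<in># L \<and> mset cs = L - {#c#}")
      case True
      then have "length (filter (\<lambda>b. c \<in> B1 \<and> b \<in> B1 \<and> b < c) cs) =
                 length (filter (\<lambda>b. c \<in> B1 \<and> b \<in> B1 \<and> b < c) (sorted_list_of_multiset (L - {#c#})))"
        by (intro length_filter_mset) simp
      then show ?thesis using True
        by (simp add: add_mset_eq_iff' sg_Cons prod.lessThan_Suc_shift del: prod.lessThan_Suc) 
    next
      case False
      then show ?thesis by (auto simp: add_mset_eq_iff')
    qed
    show "(\<Sum>cs\<in>tuples B ?n. (if mset (c # cs) = L then sg B1 (c # cs) else 0) * (\<Prod>k<Suc ?n. f ((x # m') ! k) ((c # cs) ! k)))
      = (if c \<in># L then f x c * ?s c * Fs B B1 f m' (L - {#c#}) else 0)"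
      unfolding t Fs_def by (cases "c \<in># L") (simp_all add: sum_distrib_left)
  qed
  finally show ?thesis .
qed

lemma Fs_block:
  fixes A C B1 B :: "'b::linorder set" and f :: "'b \<Rightarrow> 'b \<Rightarrow> 'r::{idom, ring_char_0}"
  assumes finB: "finite B" and Bdef: "B = A \<union> C \<union> B1"
    and disj: "A \<inter> C = {}" "A \<inter> B1 = {}" "C \<inter> B1 = {}"
    and evf: "evenf B B1 f" and iso: "\<forall>a\<in>A. \<forall>a'\<in>A. f a a' = 0" and xA: "x \<in> A"
  shows "Fs B B1 f (replicate r x @ m'') L = (\<Sum>N1\<in>mset ` tuples C r.
     of_nat (card (permutations_of_multiset N1)) * ((\<Prod>k<r. f x (sorted_list_of_multiset N1 ! k)) *
       (if N1 \<subseteq># L then Fs B B1 f m'' (L - N1) else 0)))"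
proof -
  let ?n = "length m''"
  let ?P = "\<lambda>cs1. \<Prod>k<r. f x (cs1 ! k)"
  let ?Q = "\<lambda>cs2. \<Prod>k<?n. f (m'' ! k) (cs2 ! k)"
  let ?G = "\<lambda>N1. if N1 \<subseteq># L then Fs B B1 f m'' (L - N1) else 0"
  have finC: "finite C" using finB Bdef by auto
  have "Fs B B1 f (replicate r x @ m'') L = (\<Sum>cs1\<in>tuples B r. \<Sum>cs2\<in>tuples B ?n.
      (if mset (cs1 @ cs2) = L then sg B1 (cs1 @ cs2) else 0) * (?P cs1 * ?Q cs2))"
    unfolding Fs_def length_append length_replicate sum_tuples_append
  proof (intro sum.cong refl)
    fix cs1 cs2 assume cs1: "cs1 \<in> tuples B r"
    then have l1: "length cs1 = r" by (simp add: tuples_def)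
    have "(\<Prod>k<r + ?n. f ((replicate r x @ m'') ! k) ((cs1 @ cs2) ! k)) =
      (\<Prod>k<r. f ((replicate r x @ m'') ! k) ((cs1 @ cs2) ! k)) * (\<Prod>k<?n. f ((replicate r x @ m'') ! (r + k)) ((cs1 @ cs2) ! (r + k)))"
      by (rule prod_split_add)
    also have "\<dots> = ?P cs1 * ?Q cs2"
      using l1 by (simp add: nth_append)
    finally show "(if mset (cs1 @ cs2) = L then sg B1 (cs1 @ cs2) else 0) *
        (\<Prod>k<r + ?n. f ((replicate r x @ m'') ! k) ((cs1 @ cs2) ! k)) =
      (if mset (cs1 @ cs2) = L then sg B1 (cs1 @ cs2) else 0) * (?P cs1 * ?Q cs2)" by simp
  qed
  also have "\<dots> = (\<Sum>cs1\<in>tuples C r. \<Sum>cs2\<in>tuples B ?n.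
      (if mset (cs1 @ cs2) = L then sg B1 (cs1 @ cs2) else 0) * (?P cs1 * ?Q cs2))"
  proof (rule sum.mono_neutral_right)
    show "finite (tuples B r)" using finB by simp
    show "tuples C r \<subseteq> tuples B r" using Bdef by (auto simp: tuples_def)
    show "\<forall>cs1\<in>tuples B r - tuples C r. (\<Sum>cs2\<in>tuples B ?n.
      (if mset (cs1 @ cs2) = L then sg B1 (cs1 @ cs2) else 0) * (?P cs1 * ?Q cs2)) = 0"
    proof
      fix cs1 assume cs1: "cs1 \<in> tuples B r - tuples C r"
      then have "\<not> set cs1 \<subseteq> C" "length cs1 = r" by (auto simp: tuples_def)
      then obtain k where k: "k < r" "cs1 ! k \<notin> C"
        by (metis in_set_conv_nth subsetI)
      have "set cs1 \<subseteq> B" using cs1 by (simp add: tuples_def)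
      then have "cs1 ! k \<in> B" using k \<open>length cs1 = r\<close> by (meson nth_mem subsetD)
      then have "cs1 ! k \<in> A \<or> cs1 ! k \<in> B1" using Bdef k by auto
      moreover have "x \<in> B" "x \<notin> B1" using xA Bdef disj by auto
      ultimately have "f x (cs1 ! k) = 0" using iso xA evf \<open>cs1 ! k \<in> B\<close> by (auto simp: evenf_def)
      then have P0: "?P cs1 = 0" using k by (intro prod_zero) auto
      show "(\<Sum>cs2\<in>tuples B ?n.
        (if mset (cs1 @ cs2) = L then sg B1 (cs1 @ cs2) else 0) * (?P cs1 * ?Q cs2)) = 0" unfolding P0 by simp
    qed
  qed
  also have "\<dots> = (\<Sum>cs1\<in>tuples C r. ?P cs1 * ?G (mset cs1))"
  proof (intro sum.cong refl)
    fix cs1 assume cs1: "cs1 \<in> tuples C r"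
    then have "set cs1 \<inter> B1 = {}" using disj by (auto simp: tuples_def)
    then have sg: "sg B1 (cs1 @ cs2) = (sg B1 cs2 :: 'r)" for cs2 by (simp add: sg_def inv_odd_append_even)
    show "(\<Sum>cs2\<in>tuples B ?n. (if mset (cs1 @ cs2) = L then sg B1 (cs1 @ cs2) else 0) * (?P cs1 * ?Q cs2)) =
        ?P cs1 * ?G (mset cs1)"
      by (cases "mset cs1 \<subseteq># L") (auto simp: sg add_eq_iff_sub Fs_def sum_distrib_left mult_ac intro!: sum.cong)
  qed
  also have "\<dots> = (\<Sum>N1\<in>mset ` tuples C r. \<Sum>cs1\<in>{cs \<in> tuples C r. mset cs = N1}. ?P cs1 * ?G (mset cs1))"
    using finC by (intro sum.group[symmetric]) auto
  also have "\<dots> = (\<Sum>N1\<in>mset ` tuples C r.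
     of_nat (card (permutations_of_multiset N1)) * (?P (sorted_list_of_multiset N1) * ?G N1))"
  proof (intro sum.cong refl)
    fix N1 assume "N1 \<in> mset ` tuples C r"
    then have NC: "set_mset N1 \<subseteq> C" "size N1 = r" by (auto simp: tuples_def)
    have "(\<Sum>cs1\<in>{cs \<in> tuples C r. mset cs = N1}. ?P cs1 * ?G (mset cs1)) =
          (\<Sum>cs1\<in>tuples C r. if mset cs1 = N1 then ?P cs1 * ?G (mset cs1) else 0)"
      using finC by (simp only: sum.inter_filter finite_tuples)
    also have "\<dots> = of_nat (card (permutations_of_multiset N1)) * (?P (sorted_list_of_multiset N1) * ?G (mset (sorted_list_of_multiset N1)))"
    proof (rule sum_class_const[OF finC NC, where F = "\<lambda>cs. ?P cs * ?G (mset cs)"])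
      show "mset (sorted_list_of_multiset N1) = N1" by simp
      fix cs assume cs: "mset cs = N1"
      have "length cs = r" "length (sorted_list_of_multiset N1) = r"
        using cs NC by (auto simp flip: size_mset)
      then have "?P cs = ?P (sorted_list_of_multiset N1)"
        using prod_nth_mset[of cs "sorted_list_of_multiset N1" "f x"] cs by simp
      then show "?P cs * ?G (mset cs) = ?P (sorted_list_of_multiset N1) * ?G (mset (sorted_list_of_multiset N1))" using cs by simp
    qed
    also have "?G (mset (sorted_list_of_multiset N1)) = ?G N1" by simp
    finally show "(\<Sum>cs1\<in>{cs \<in> tuples C r. mset cs = N1}. ?P cs1 * ?G (mset cs1)) =
       of_nat (card (permutations_of_multiset N1)) * (?P (sorted_list_of_multiset N1) * ?G N1)" .
  qed
  finally show ?thesis .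
qed

lemma Fs_dvd:
  fixes A C B1 B :: "'b::linorder set" and f :: "'b \<Rightarrow> 'b \<Rightarrow> 'r::{idom, ring_char_0}"
  assumes finB: "finite B" and Bdef: "B = A \<union> C \<union> B1"
    and disj: "A \<inter> C = {}" "A \<inter> B1 = {}" "C \<inter> B1 = {}"
    and evf: "evenf B B1 f" and iso: "\<forall>a\<in>A. \<forall>a'\<in>A. f a a' = 0"
  shows "sorted m \<Longrightarrow> set m \<subseteq> B \<Longrightarrow> of_nat (cfact A (mset m)) dvd of_nat (cfact C L) * Fs B B1 f m L"
proof (induction "length m" arbitrary: m L rule: less_induct)
  case less
  show ?case
  proof (cases m)
    case Nil then show ?thesis by simp
  next
    case (Cons x m')
    have finA: "finite A" and finC: "finite C" using finB Bdef by auto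
    show ?thesis
    proof (cases "x \<in> A")
      case False
      have cA: "cfact A (mset (x # m')) = cfact A (mset m')" using False by (simp add: cfact_add_notin)
      have IH: "of_nat (cfact A (mset m')) dvd of_nat (cfact C L') * Fs B B1 f m' L'" for L'
        using less.hyps[of m' L'] less.prems Cons by auto
      show ?thesis unfolding Cons cA Fs_Cons sum_distrib_left
      proof (intro dvd_sum)
        fix c assume "c \<in> B"
        show "of_nat (cfact A (mset m')) dvd of_nat (cfact C L) * (if c \<in># L then f x c *
          (-1) ^ length (filter (\<lambda>b. c \<in> B1 \<and> b \<in> B1 \<and> b < c) (sorted_list_of_multiset (L - {#c#}))) *
          Fs B B1 f m' (L - {#c#}) else 0)" (is "_ dvd _ * (if _ then ?a * ?F else 0)")
        proof (cases "c \<in># L")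
          case True
          obtain k where k: "cfact C L = cfact C (L - {#c#}) * k" using cfact_diff_dvd[of C L "{#c#}"] by (auto elim: dvdE)
          have d: "of_nat (cfact A (mset m')) dvd (of_nat (cfact C (L - {#c#})) * ?F) * (of_nat k * ?a)"
            by (rule dvd_mult2[OF IH])
          have eq: "of_nat (cfact C L) * (if c \<in># L then ?a * ?F else 0) = (of_nat (cfact C (L - {#c#})) * ?F) * (of_nat k * ?a)"
            using True unfolding k by (simp add: mult_ac)
          show ?thesis unfolding eq by (rule d)
        qed simp
      qed
    next
      case True
      define r where "r = length (takeWhile (\<lambda>y. y = x) m)"
      define m'' where "m'' = dropWhile (\<lambda>y. y = x) m"
      have tw: "takeWhile (\<lambda>y. y = x) m = replicate r x"
        unfolding r_def by (metis (mono_tags, lifting) replicate_length_same set_takeWhileD)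
      have meq: "m = replicate r x @ m''"
        unfolding m''_def using takeWhile_dropWhile_id[of "\<lambda>y. y = x" m] tw by simp
      have r1: "r \<ge> 1" unfolding r_def using Cons by simp
      have xm: "x \<notin> set m''"
        unfolding m''_def using Cons less.prems(1) notin_dropWhile_sorted[of x m'] by simp
      have lm: "length m'' < length m" using meq r1 by (metis length_append length_replicate less_add_same_cancel2 le_less_trans not_one_le_zero not_less)
      have sm: "sorted m''" unfolding m''_def using less.prems(1) by (rule sorted_dropWhile)
      have Bm: "set m'' \<subseteq> B" unfolding m''_def using less.prems(2) by (meson set_dropWhileD subset_iff)
      have IH: "of_nat (cfact A (mset m'')) dvd of_nat (cfact C L') * Fs B B1 f m'' L'" for L'
        using less.hyps[OF lm sm Bm] .
      have cA: "cfact A (mset m) = fact r * cfact A (mset m'')"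
        unfolding meq using cfact_rep[OF finA True, of "mset m''" r] xm by simp
      show ?thesis
        unfolding cA meq[symmetric] Fs_block[OF finB Bdef disj evf iso True, of r m'' L, folded meq] sum_distrib_left
      proof (intro dvd_sum)
        fix N1 assume "N1 \<in> mset ` tuples C r"
        then have NC: "set_mset N1 \<subseteq> C" "size N1 = r" by (auto simp: tuples_def)
        let ?p = "card (permutations_of_multiset N1)"
        let ?P = "\<Prod>k<r. f x (sorted_list_of_multiset N1 ! k)"
        show "of_nat (fact r * cfact A (mset m'')) dvd of_nat (cfact C L) *
            (of_nat ?p * (?P * (if N1 \<subseteq># L then Fs B B1 f m'' (L - N1) else 0)))"
        proof (cases "N1 \<subseteq># L")
          case True
          obtain k where k: "cfact C L = cfact C N1 * cfact C (L - N1) * k"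
            using cfact_sub_dvd[OF True, of C] by (auto elim: dvdE)
          have pc: "?p * cfact C N1 = fact r" using perm_card_cfact[OF finC NC(1)] NC(2) by simp
          have "of_nat (cfact C L) * (of_nat ?p * (?P * Fs B B1 f m'' (L - N1))) =
              (of_nat (?p * cfact C N1) * of_nat k * ?P) * (of_nat (cfact C (L - N1)) * Fs B B1 f m'' (L - N1))"
            unfolding k by (simp add: mult_ac)
          also have "\<dots> = (of_nat (fact r) * (of_nat k * ?P)) * (of_nat (cfact C (L - N1)) * Fs B B1 f m'' (L - N1))"
            unfolding pc by (simp add: mult_ac)
          finally have e: "of_nat (cfact C L) * (of_nat ?p * (?P * Fs B B1 f m'' (L - N1))) =
              (of_nat (fact r) * (of_nat k * ?P)) * (of_nat (cfact C (L - N1)) * Fs B B1 f m'' (L - N1))" .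
          have dv: "of_nat (fact r) * of_nat (cfact A (mset m'')) dvd
              (of_nat (fact r) * (of_nat k * ?P)) * (of_nat (cfact C (L - N1)) * Fs B B1 f m'' (L - N1))"
            by (rule mult_dvd_mono[OF _ IH]) simp
          have eq2: "of_nat (cfact C L) * (of_nat ?p * (?P * (if N1 \<subseteq># L then Fs B B1 f m'' (L - N1) else 0)))
              = (of_nat (fact r) * (of_nat k * ?P)) * (of_nat (cfact C (L - N1)) * Fs B B1 f m'' (L - N1))"
            by (simp only: if_P[OF True] e)
          show ?thesis unfolding of_nat_mult[of "fact r"] eq2 by (rule dv)
        qed simp
      qed
    qed
  qed
qed

lemma div_tform:
  fixes A C B1 B :: "'b::linorder set" and f :: "'b \<Rightarrow> 'b \<Rightarrow> 'r::{idom, ring_char_0}"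
  assumes finB: "finite B" and Bdef: "B = A \<union> C \<union> B1"
    and disj: "A \<inter> C = {}" "A \<inter> B1 = {}" "C \<inter> B1 = {}"
    and evf: "evenf B B1 f" and iso: "\<forall>a\<in>A. \<forall>a'\<in>A. f a a' = 0"
    and M: "M \<in> MS B B1 d" and L: "L \<in> MS B B1 d"
  shows "of_nat (fact d) dvd tform B B1 f d (Y B1 C M) (Y B1 C L)"
proof -
  let ?m = "sorted_list_of_multiset M"
  let ?u = "uv B B1 f d (X B1 L)"
  let ?p = "card (permutations_of_multiset M)"
  have MB: "set_mset M \<subseteq> B" "size M = d" using M by (auto simp: MS_iff)
  have mt: "?m \<in> tuples B d" using MB by (auto simp: tuples_def simp flip: size_mset)
  have lm: "length ?m = d" using mt by (simp add: tuples_def)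
  have ui: "invt B1 ?u" by (rule invt_uv[OF evf X_invt[OF MS_valid[OF L]]])
  have "tform B B1 f d (Y B1 C M) (Y B1 C L) = of_nat (cfact C M) * of_nat (cfact C L) *
          (\<Sum>bs\<in>tuples B d. X B1 M bs * ?u bs)"
    unfolding Y_eq tform_smult tform_uv ..
  also have "(\<Sum>bs\<in>tuples B d. X B1 M bs * ?u bs) = of_nat ?p * (sg B1 ?m * ?u ?m)"
    by (rule sum_X[OF finB MB _ ui]) simp
  also have "?u ?m = (-1) ^ tsign B1 ?m ?m * Fs B B1 f ?m L"
  proof -
    have "?u ?m = (\<Sum>cs\<in>tuples B d. (-1) ^ tsign B1 ?m ?m * ((if mset cs = L then sg B1 cs else 0) * (\<Prod>k<d. f (?m ! k) (cs ! k))))"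
      using mt by (auto simp: uv_def Gk_closed[OF evf mt] X_def intro!: sum.cong)
    then show ?thesis by (simp add: Fs_def lm sum_distrib_left)
  qed
  finally have e: "tform B B1 f d (Y B1 C M) (Y B1 C L) =
     (of_nat (cfact C M) * of_nat ?p) * ((of_nat (cfact C L) * Fs B B1 f ?m L) * (sg B1 ?m * (-1) ^ tsign B1 ?m ?m))"
    by (simp add: mult_ac)
  have fd: "(of_nat (fact d) :: 'r) = (of_nat (cfact C M) * of_nat ?p) * of_nat (cfact A M)"
    using factM[OF finB Bdef disj M] by (metis mult.commute mult.left_commute of_nat_mult)
  have dv: "of_nat (cfact A (mset ?m)) dvd of_nat (cfact C L) * Fs B B1 f ?m L"
    by (rule Fs_dvd[OF finB Bdef disj evf iso]) (use MB in auto)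
  show ?thesis unfolding e fd
    by (rule mult_dvd_mono[OF dvd_refl dvd_mult2]) (use dv in simp)
qed

lemma pp_abstract:
  fixes Yb :: "'m \<Rightarrow> 'x \<Rightarrow> 'r::comm_ring_1" and F :: "('x \<Rightarrow> 'r) \<Rightarrow> ('x \<Rightarrow> 'r) \<Rightarrow> 'r"
    and T W :: "'m \<Rightarrow> 'm \<Rightarrow> 'r"
  assumes fin: "finite S"
    and Gdef: "G = {(\<lambda>i. \<Sum>N\<in>S. a N * Yb N i) | a. True}"
    and bil: "\<And>a b. F (\<lambda>i. \<Sum>N\<in>S. a N * Yb N i) (\<lambda>i. \<Sum>N\<in>S. b N * Yb N i) = (\<Sum>N\<in>S. \<Sum>L\<in>S. a N * b L * T N L)"
    and TW: "\<And>N L. N \<in> S \<Longrightarrow> L \<in> S \<Longrightarrow> (\<Sum>K\<in>S. T N K * W K L) = (if N = L then 1 else 0)"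
    and WT: "\<And>N L. N \<in> S \<Longrightarrow> L \<in> S \<Longrightarrow> (\<Sum>K\<in>S. W N K * T K L) = (if N = L then 1 else 0)"
  shows "perfect_pairing G G F"
proof -
  define vec where "vec a = (\<lambda>i. \<Sum>N\<in>S. a N * Yb N i)" for a
  have Gv: "G = range vec" unfolding Gdef vec_def by auto
  have vG: "vec a \<in> G" for a unfolding Gv by simp
  have Yv: "Yb L = vec (\<lambda>N. if N = L then 1 else 0)" if "L \<in> S" for L
    using that fin by (simp add: vec_def fun_eq_iff if_distrib[of "\<lambda>x. x * _"] cong: if_cong)
  have bil': "F (vec a) (vec b) = (\<Sum>N\<in>S. \<Sum>L\<in>S. a N * b L * T N L)" for a b
    unfolding vec_def by (rule bil)
  have FvY: "F (vec a) (Yb L) = (\<Sum>N\<in>S. a N * T N L)" if "L \<in> S" for a L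
    unfolding Yv[OF that] bil' using that fin
    by (intro sum.cong refl) (simp add: if_distrib[of "\<lambda>x. _ * x * _"] cong: if_cong)
  have FYv: "F (Yb N) (vec b) = (\<Sum>L\<in>S. b L * T N L)" if "N \<in> S" for b N
  proof -
    have "F (Yb N) (vec b) = (\<Sum>Na\<in>S. if Na = N then (\<Sum>L\<in>S. b L * T Na L) else 0)"
      unfolding Yv[OF that] bil' by (intro sum.cong refl) auto
    also have "\<dots> = (\<Sum>L\<in>S. b L * T N L)" using that fin by simp
    finally show ?thesis .
  qed
  have linsum: "\<phi> (vec b) = (\<Sum>L\<in>S. b L * \<phi> (Yb L))" if lin: "lin_functional G \<phi>" for \<phi> b
  proof -
    have part: "\<phi> (\<lambda>i. \<Sum>L\<in>U. b L * Yb L i) = (\<Sum>L\<in>U. b L * \<phi> (Yb L))" if "U \<subseteq> S" for U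
    proof -
      have fU: "finite U" using that fin by (rule finite_subset)
      show ?thesis using fU that
      proof (induction U rule: finite_induct)
        case empty
        have "\<phi> (\<lambda>i. 0 * vec (\<lambda>_. 0) i + 0 * vec (\<lambda>_. 0) i) = 0 * \<phi> (vec (\<lambda>_. 0)) + 0 * \<phi> (vec (\<lambda>_. 0))"
          by (rule lin[unfolded lin_functional_def, rule_format, OF vG vG])
        then show ?case by simp
      next
        case (insert a U)
        have inU: "(\<lambda>i. \<Sum>L\<in>U. b L * Yb L i) = vec (\<lambda>N. if N \<in> U then b N else 0)"
          using insert.prems fin unfolding vec_def
          by (auto simp: fun_eq_iff if_distrib[of "\<lambda>x. x * _"] sum.If_cases Int_absorb1 cong: if_cong)
        have aS: "a \<in> S" using insert.prems by simp
        let ?ea = "\<lambda>N. if N = a then 1 else 0" and ?eU = "\<lambda>N. if N \<in> U then b N else 0"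
        have l: "\<phi> (\<lambda>i. b a * vec ?ea i + 1 * vec ?eU i) = b a * \<phi> (vec ?ea) + 1 * \<phi> (vec ?eU)"
          by (rule lin[unfolded lin_functional_def, rule_format, OF vG vG])
        have e1: "vec ?ea = Yb a" using Yv[OF aS] by simp
        have e2: "vec ?eU = (\<lambda>i. \<Sum>L\<in>U. b L * Yb L i)" using inU by simp
        have "\<phi> (\<lambda>i. \<Sum>L\<in>insert a U. b L * Yb L i) = \<phi> (\<lambda>i. b a * vec ?ea i + 1 * vec ?eU i)"
          unfolding e1 e2 using insert.hyps by simp
        also have "\<dots> = b a * \<phi> (Yb a) + 1 * \<phi> (\<lambda>i. \<Sum>L\<in>U. b L * Yb L i)"
          using l unfolding e1 e2 .
        also have "\<dots> = (\<Sum>L\<in>insert a U. b L * \<phi> (Yb L))"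
          using insert by simp
        finally show ?case .
      qed
    qed
    show ?thesis using part[of S] by (simp add: vec_def)
  qed
  have uniqL: "\<forall>K\<in>S. a1 K = a2 K" if "\<forall>L\<in>S. (\<Sum>N\<in>S. a1 N * T N L) = (\<Sum>N\<in>S. a2 N * T N L)" for a1 a2
  proof
    fix K assume K: "K \<in> S"
    have rec: "(\<Sum>L\<in>S. (\<Sum>N\<in>S. a N * T N L) * W L K) = a K" for a
    proof -
      have "(\<Sum>L\<in>S. (\<Sum>N\<in>S. a N * T N L) * W L K) = (\<Sum>N\<in>S. a N * (\<Sum>L\<in>S. T N L * W L K))"
        by (simp add: sum_distrib_left sum_distrib_right mult_ac) (rule sum.swap)
      also have "\<dots> = (\<Sum>N\<in>S. a N * (if N = K then 1 else 0))"
        using K by (intro sum.cong refl) (simp add: TW)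
      also have "\<dots> = a K" using K fin by (simp add: if_distrib[of "\<lambda>x. _ * x"] cong: if_cong)
      finally show ?thesis .
    qed
    show "a1 K = a2 K" using rec[of a1] rec[of a2] that by simp
  qed
  have uniqR: "\<forall>K\<in>S. b1 K = b2 K" if "\<forall>N\<in>S. (\<Sum>L\<in>S. b1 L * T N L) = (\<Sum>L\<in>S. b2 L * T N L)" for b1 b2
  proof
    fix K assume K: "K \<in> S"
    have rec: "(\<Sum>N\<in>S. W K N * (\<Sum>L\<in>S. b L * T N L)) = b K" for b
    proof -
      have "(\<Sum>N\<in>S. W K N * (\<Sum>L\<in>S. b L * T N L)) = (\<Sum>L\<in>S. b L * (\<Sum>N\<in>S. W K N * T N L))"
        by (simp add: sum_distrib_left sum_distrib_right mult_ac) (rule sum.swap)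
      also have "\<dots> = (\<Sum>L\<in>S. b L * (if K = L then 1 else 0))"
        using K by (intro sum.cong refl) (simp add: WT)
      also have "\<dots> = b K" using K fin by (simp add: if_distrib[of "\<lambda>x. _ * x"] cong: if_cong)
      finally show ?thesis .
    qed
    show "b1 K = b2 K" using rec[of b1] rec[of b2] that by simp
  qed
  have vec_cong: "vec a1 = vec a2" if "\<forall>K\<in>S. a1 K = a2 K" for a1 a2
    unfolding vec_def using that by (auto intro!: sum.cong)
  show ?thesis unfolding perfect_pairing_def
  proof (intro conjI allI impI)
    fix \<phi> assume lin: "lin_functional G \<phi>"
    define a where "a N = (\<Sum>K\<in>S. \<phi> (Yb K) * W K N)" for N
    have key: "(\<Sum>N\<in>S. a N * T N L) = \<phi> (Yb L)" if L: "L \<in> S" for L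
    proof -
      have "(\<Sum>N\<in>S. a N * T N L) = (\<Sum>K\<in>S. \<phi> (Yb K) * (\<Sum>N\<in>S. W K N * T N L))"
        unfolding a_def by (simp add: sum_distrib_left sum_distrib_right mult_ac) (rule sum.swap)
      also have "\<dots> = (\<Sum>K\<in>S. \<phi> (Yb K) * (if K = L then 1 else 0))"
        using L by (intro sum.cong refl) (simp add: WT)
      also have "\<dots> = \<phi> (Yb L)" using L fin by (simp add: if_distrib[of "\<lambda>x. _ * x"] cong: if_cong)
      finally show ?thesis .
    qed
    show "\<exists>!x. x \<in> G \<and> (\<forall>y\<in>G. F x y = \<phi> y)"
    proof (rule ex_ex1I)
      show "\<exists>x. x \<in> G \<and> (\<forall>y\<in>G. F x y = \<phi> y)"
      proof (intro exI conjI ballI)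
        show "vec a \<in> G" by (rule vG)
        fix y assume "y \<in> G"
        then obtain b where y: "y = vec b" unfolding Gv by auto
        have "F (vec a) y = (\<Sum>L\<in>S. b L * (\<Sum>N\<in>S. a N * T N L))"
          unfolding y bil' by (simp add: sum_distrib_left mult_ac) (rule sum.swap)
        also have "\<dots> = (\<Sum>L\<in>S. b L * \<phi> (Yb L))" by (intro sum.cong refl) (simp add: key)
        also have "\<dots> = \<phi> y" unfolding y by (rule linsum[OF lin, symmetric])
        finally show "F (vec a) y = \<phi> y" .
      qed
    next
      fix x1 x2 assume x1: "x1 \<in> G \<and> (\<forall>y\<in>G. F x1 y = \<phi> y)" and x2: "x2 \<in> G \<and> (\<forall>y\<in>G. F x2 y = \<phi> y)"
      obtain a1 a2 where a: "x1 = vec a1" "x2 = vec a2" using x1 x2 unfolding Gv by auto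
      have "\<forall>L\<in>S. (\<Sum>N\<in>S. a1 N * T N L) = (\<Sum>N\<in>S. a2 N * T N L)"
      proof
        fix L assume L: "L \<in> S"
        have "Yb L \<in> G" using Yv[OF L] vG by simp
        then show "(\<Sum>N\<in>S. a1 N * T N L) = (\<Sum>N\<in>S. a2 N * T N L)"
        proof -
          have "F x1 (Yb L) = \<phi> (Yb L)" "F x2 (Yb L) = \<phi> (Yb L)"
            using x1[THEN conjunct2, rule_format, OF \<open>Yb L \<in> G\<close>] x2[THEN conjunct2, rule_format, OF \<open>Yb L \<in> G\<close>] .
          then show ?thesis using FvY[OF L, of a1] FvY[OF L, of a2] a by simp
        qed
      qed
      then show "x1 = x2" unfolding a by (rule vec_cong[OF uniqL])
    qed
  next
    fix \<psi> assume lin: "lin_functional G \<psi>"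
    define b where "b L = (\<Sum>K\<in>S. W L K * \<psi> (Yb K))" for L
    have key: "(\<Sum>L\<in>S. b L * T N L) = \<psi> (Yb N)" if N: "N \<in> S" for N
    proof -
      have "(\<Sum>L\<in>S. b L * T N L) = (\<Sum>K\<in>S. \<psi> (Yb K) * (\<Sum>L\<in>S. T N L * W L K))"
        unfolding b_def by (simp add: sum_distrib_left sum_distrib_right mult_ac) (rule sum.swap)
      also have "\<dots> = (\<Sum>K\<in>S. \<psi> (Yb K) * (if N = K then 1 else 0))"
        using N by (intro sum.cong refl) (simp add: TW)
      also have "\<dots> = \<psi> (Yb N)" using N fin by (simp add: if_distrib[of "\<lambda>x. _ * x"] cong: if_cong)
      finally show ?thesis .
    qed
    show "\<exists>!y. y \<in> G \<and> (\<forall>x\<in>G. F x y = \<psi> x)"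
    proof (rule ex_ex1I)
      show "\<exists>y. y \<in> G \<and> (\<forall>x\<in>G. F x y = \<psi> x)"
      proof (intro exI conjI ballI)
        show "vec b \<in> G" by (rule vG)
        fix x assume "x \<in> G"
        then obtain a where x: "x = vec a" unfolding Gv by auto
        have "F x (vec b) = (\<Sum>N\<in>S. a N * (\<Sum>L\<in>S. b L * T N L))"
          unfolding x bil' by (simp add: sum_distrib_left mult_ac)
        also have "\<dots> = (\<Sum>N\<in>S. a N * \<psi> (Yb N))" by (intro sum.cong refl) (simp add: key)
        also have "\<dots> = \<psi> x" unfolding x by (rule linsum[OF lin, symmetric])
        finally show "F x (vec b) = \<psi> x" .
      qed
    next
      fix y1 y2 assume y1: "y1 \<in> G \<and> (\<forall>x\<in>G. F x y1 = \<psi> x)" and y2: "y2 \<in> G \<and> (\<forall>x\<in>G. F x y2 = \<psi> x)"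
      obtain b1 b2 where b: "y1 = vec b1" "y2 = vec b2" using y1 y2 unfolding Gv by auto
      have "\<forall>N\<in>S. (\<Sum>L\<in>S. b1 L * T N L) = (\<Sum>L\<in>S. b2 L * T N L)"
      proof
        fix N assume N: "N \<in> S"
        have "Yb N \<in> G" using Yv[OF N] vG by simp
        then show "(\<Sum>L\<in>S. b1 L * T N L) = (\<Sum>L\<in>S. b2 L * T N L)"
        proof -
          have "F (Yb N) y1 = \<psi> (Yb N)" "F (Yb N) y2 = \<psi> (Yb N)"
            using y1[THEN conjunct2, rule_format, OF \<open>Yb N \<in> G\<close>] y2[THEN conjunct2, rule_format, OF \<open>Yb N \<in> G\<close>] .
          then show ?thesis using FYv[OF N, of b1] FYv[OF N, of b2] b by simp
        qed
      qed
      then show "y1 = y2" unfolding b by (rule vec_cong[OF uniqR])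
    qed
  qed
qed

lemma delta_fvec: "j \<in> B \<Longrightarrow> (\<lambda>i. if i = j then 1 else 0) \<in> fvec B"
  by (auto simp: fvec_def)

lemma vform_delta_right:
  fixes g :: "'b \<Rightarrow> 'b \<Rightarrow> 'r::comm_ring_1"
  assumes "finite S2" "j \<in> S2"
  shows "vform S1 S2 g x (\<lambda>i. if i = j then 1 else 0) = (\<Sum>i\<in>S1. x i * g i j)"
  unfolding vform_def using assms
  by (intro sum.cong refl) (simp add: if_distrib[of "\<lambda>t. _ * t * _"] cong: if_cong)

lemma vform_delta_left:
  fixes g :: "'b \<Rightarrow> 'b \<Rightarrow> 'r::comm_ring_1"
  assumes "finite S1" "j \<in> S1"
  shows "vform S1 S2 g (\<lambda>i. if i = j then 1 else 0) y = (\<Sum>k\<in>S2. g j k * y k)"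
proof -
  have "vform S1 S2 g (\<lambda>i. if i = j then 1 else 0) y = (\<Sum>i\<in>S1. if i = j then (\<Sum>k\<in>S2. y k * g i k) else 0)"
    unfolding vform_def by (intro sum.cong refl) auto
  also have "\<dots> = (\<Sum>k\<in>S2. g j k * y k)" using assms by (simp add: mult.commute)
  finally show ?thesis .
qed

lemma sum_delta_mult:
  fixes f :: "'a \<Rightarrow> 'r::comm_ring_1"
  assumes "finite S" "b \<in> S"
  shows "(\<Sum>k\<in>S. (if k = b then 1 else 0) * f k) = f b"
proof -
  have "(\<Sum>k\<in>S. (if k = b then 1 else 0) * f k) = (\<Sum>k\<in>S. if k = b then f k else 0)"
    by (intro sum.cong) auto
  then show ?thesis using assms by simp
qed

lemma lin_eval: "lin_functional M (\<lambda>y. y a)"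
  by (simp add: lin_functional_def)

lemma inverse_exists:
  fixes g :: "'b \<Rightarrow> 'b \<Rightarrow> 'r::comm_ring_1"
  assumes finB: "finite B" and nondeg: "perfect_pairing (fvec B) (fvec B) (vform B B g)"
  shows "\<exists>h. (\<forall>b\<in>B. \<forall>a\<in>B. (\<Sum>c\<in>B. g b c * h c a) = (if b = a then 1 else 0)) \<and>
             (\<forall>b\<in>B. \<forall>a\<in>B. (\<Sum>c\<in>B. h b c * g c a) = (if b = a then 1 else 0))"
proof -
  have "\<forall>a. \<exists>x. x \<in> fvec B \<and> (\<forall>y\<in>fvec B. vform B B g x y = y a)"
  proof
    fix a show "\<exists>x. x \<in> fvec B \<and> (\<forall>y\<in>fvec B. vform B B g x y = y a)"
      by (rule ex1_implies_ex[OF nondeg[unfolded perfect_pairing_def, THEN conjunct1, rule_format, OF lin_eval]])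
  qed
  then obtain P where P: "\<And>a. P a \<in> fvec B \<and> (\<forall>y\<in>fvec B. vform B B g (P a) y = y a)" by metis
  have "\<forall>a. \<exists>y. y \<in> fvec B \<and> (\<forall>x\<in>fvec B. vform B B g x y = x a)"
  proof
    fix a show "\<exists>y. y \<in> fvec B \<and> (\<forall>x\<in>fvec B. vform B B g x y = x a)"
      by (rule ex1_implies_ex[OF nondeg[unfolded perfect_pairing_def, THEN conjunct2, rule_format, OF lin_eval]])
  qed
  then obtain Q where Q: "\<And>a. Q a \<in> fvec B \<and> (\<forall>x\<in>fvec B. vform B B g x (Q a) = x a)" by metis
  have PL: "(\<Sum>i\<in>B. P a i * g i j) = (if j = a then 1 else 0)" if "j \<in> B" for a j
    using P[of a] delta_fvec[OF that] vform_delta_right[OF finB that, of B g "P a"] by auto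
  have QR: "(\<Sum>k\<in>B. g i k * Q a k) = (if i = a then 1 else 0)" if "i \<in> B" for a i
    using Q[of a] delta_fvec[OF that] vform_delta_left[OF finB that, of B g "Q a"] by auto
  have PQ: "P a j = Q j a" if "a \<in> B" "j \<in> B" for a j
  proof -
    have "(\<Sum>i\<in>B. P a i * (\<Sum>k\<in>B. g i k * Q j k)) = (\<Sum>i\<in>B. P a i * (if i = j then 1 else 0))"
      by (intro sum.cong refl) (simp add: QR)
    also have "\<dots> = P a j" using finB that by (simp add: if_distrib[of "\<lambda>t. _ * t"] cong: if_cong)
    finally have 1: "(\<Sum>i\<in>B. P a i * (\<Sum>k\<in>B. g i k * Q j k)) = P a j" .
    have "(\<Sum>i\<in>B. P a i * (\<Sum>k\<in>B. g i k * Q j k)) = (\<Sum>k\<in>B. (\<Sum>i\<in>B. P a i * g i k) * Q j k)"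
      by (simp add: sum_distrib_left sum_distrib_right mult_ac) (rule sum.swap)
    also have "\<dots> = (\<Sum>k\<in>B. (if k = a then 1 else 0) * Q j k)"
      by (intro sum.cong refl) (simp add: PL)
    also have "\<dots> = Q j a" by (rule sum_delta_mult[OF finB that(1)])
    finally show ?thesis using 1 by simp
  qed
  show ?thesis
  proof (intro exI conjI ballI)
    fix b a assume "b \<in> B" "a \<in> B"
    show "(\<Sum>c\<in>B. g b c * Q a c) = (if b = a then 1 else 0)" using QR[OF \<open>b \<in> B\<close>] .
    have "(\<Sum>c\<in>B. Q c b * g c a) = (\<Sum>c\<in>B. P b c * g c a)"
      using \<open>b \<in> B\<close> by (intro sum.cong refl) (simp add: PQ)
    also have "\<dots> = (if b = a then 1 else 0)" using PL[OF \<open>a \<in> B\<close>, of b] by auto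
    finally show "(\<Sum>c\<in>B. Q c b * g c a) = (if b = a then 1 else 0)" .
  qed
qed

lemma inverse_even:
  fixes g h :: "'b \<Rightarrow> 'b \<Rightarrow> 'r::comm_ring_1"
  assumes finB: "finite B" and evg: "evenf B B1 g"
    and R: "\<forall>b\<in>B. \<forall>a\<in>B. (\<Sum>c\<in>B. g b c * h c a) = (if b = a then 1 else 0)"
    and L: "\<forall>b\<in>B. \<forall>a\<in>B. (\<Sum>c\<in>B. h b c * g c a) = (if b = a then 1 else 0)"
  shows "evenf B B1 h"
proof -
  define h' where "h' k c = (if (k \<in> B1) = (c \<in> B1) then h k c else 0)" for k c
  have R': "(\<Sum>k\<in>B. g i k * h' k a) = (if i = a then 1 else 0)" if "i \<in> B" "a \<in> B" for i a
  proof (cases "(i \<in> B1) = (a \<in> B1)")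
    case True
    have "(\<Sum>k\<in>B. g i k * h' k a) = (\<Sum>k\<in>B. g i k * h k a)"
      using evg that True by (intro sum.cong refl) (auto simp: h'_def evenf_def)
    then show ?thesis using R that by simp
  next
    case False
    have "(\<Sum>k\<in>B. g i k * h' k a) = 0"
      using evg that False by (intro sum.neutral) (auto simp: h'_def evenf_def)
    then show ?thesis using False by auto
  qed
  have hh: "h b c = h' b c" if "b \<in> B" "c \<in> B" for b c
  proof -
    have "h b c = (\<Sum>i\<in>B. h b i * (if i = c then 1 else 0))"
      using finB that by (simp add: if_distrib[of "\<lambda>t. _ * t"] cong: if_cong)
    also have "\<dots> = (\<Sum>i\<in>B. h b i * (\<Sum>k\<in>B. g i k * h' k c))"
      using that by (intro sum.cong refl) (simp add: R')
    also have "\<dots> = (\<Sum>k\<in>B. (\<Sum>i\<in>B. h b i * g i k) * h' k c)"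
      by (simp add: sum_distrib_left sum_distrib_right mult_ac) (rule sum.swap)
    also have "\<dots> = (\<Sum>k\<in>B. (if k = b then 1 else 0) * h' k c)"
      using L that by (intro sum.cong refl) auto
    also have "\<dots> = h' b c" by (rule sum_delta_mult[OF finB that(1)])
    finally show ?thesis .
  qed
  show ?thesis unfolding evenf_def
  proof (intro ballI impI)
    fix b c assume "b \<in> B" "c \<in> B" "(b \<in> B1) \<noteq> (c \<in> B1)"
    then show "h b c = 0" using hh[of b c] by (simp add: h'_def)
  qed
qed

lemma inverse_zero_CC:
  fixes Ba Bc B1 B :: "'b set" and g h :: "'b \<Rightarrow> 'b \<Rightarrow> 'r::comm_ring_1"
  assumes finB: "finite B" and Bdef: "B = Ba \<union> Bc \<union> B1"
    and disj: "Ba \<inter> Bc = {}" "Ba \<inter> B1 = {}" "Bc \<inter> B1 = {}"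
    and evg: "evenf B B1 g" and iso: "\<forall>a\<in>Ba. \<forall>a'\<in>Ba. g a a' = 0"
    and perf: "perfect_pairing (fvec Ba) (fvec Bc) (vform Ba Bc g)"
    and R: "\<forall>b\<in>B. \<forall>a\<in>B. (\<Sum>c\<in>B. g b c * h c a) = (if b = a then 1 else 0)"
  shows "\<forall>c\<in>Bc. \<forall>c'\<in>Bc. h c c' = 0"
proof (intro ballI)
  fix c c' assume c: "c \<in> Bc" and c': "c' \<in> Bc"
  have finBa: "finite Ba" and finBc: "finite Bc" using finB Bdef by auto
  have "\<exists>x. x \<in> fvec Ba \<and> (\<forall>y\<in>fvec Bc. vform Ba Bc g x y = y c)"
    by (rule ex1_implies_ex[OF perf[unfolded perfect_pairing_def, THEN conjunct1, rule_format, OF lin_eval]])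
  then obtain x where x: "x \<in> fvec Ba" "\<forall>y\<in>fvec Bc. vform Ba Bc g x y = y c" by blast
  have Qx: "(\<Sum>a\<in>Ba. x a * g a z) = (if z = c then 1 else 0)" if z: "z \<in> B" for z
  proof -
    consider "z \<in> Bc" | "z \<in> Ba" | "z \<in> B1" using z Bdef by auto
    then show ?thesis
    proof cases
      case 1
      then show ?thesis using x(2) delta_fvec[OF 1] vform_delta_right[OF finBc 1, of Ba g x] by auto
    next
      case 2
      then have "z \<noteq> c" using c disj by auto
      then show ?thesis using iso 2 by simp
    next
      case 3
      then have "z \<noteq> c" using c disj by auto
      moreover have "g a z = 0" if "a \<in> Ba" for a
        using evg that 3 Bdef disj unfolding evenf_def by blast
      ultimately show ?thesis by simp
    qed
  qed
  have "h c c' = (\<Sum>z\<in>B. (if z = c then 1 else 0) * h z c')"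
    using c Bdef by (intro sum_delta_mult[OF finB, symmetric]) auto
  also have "\<dots> = (\<Sum>z\<in>B. (\<Sum>a\<in>Ba. x a * g a z) * h z c')"
    by (intro sum.cong refl) (simp add: Qx)
  also have "\<dots> = (\<Sum>a\<in>Ba. x a * (\<Sum>z\<in>B. g a z * h z c'))"
    by (simp add: sum_distrib_left sum_distrib_right mult_ac) (rule sum.swap)
  also have "\<dots> = (\<Sum>a\<in>Ba. x a * (if a = c' then 1 else 0))"
    using R Bdef c' by (intro sum.cong refl) auto
  also have "\<dots> = 0" using c' disj by (intro sum.neutral) auto
  finally show "h c c' = 0" .
qed

lemma yvec_eq: "yvec B1 Bc bs = (\<lambda>cs. sg B1 bs * Y B1 Bc (mset bs) cs)"
  by (auto simp: fun_eq_iff yvec_def xvec_def Y_def X_def sg_def fact_c_def cfact_def count_mset power_add)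

lemma tGamma_eq:
  fixes B B1 Bc :: "'b::linorder set"
  assumes finB: "finite B"
  shows "tGamma B B1 Bc d = {(\<lambda>cs. \<Sum>N\<in>MS B B1 d. a N * (Y B1 Bc N cs :: 'r::comm_ring_1)) | a. True}"
proof -
  have finS: "finite (Seqs B B1 d)" using finB by (simp add: Seqs_def)
  have grp: "(\<Sum>bs\<in>Seqs B B1 d. c bs * yvec B1 Bc bs cs) =
      (\<Sum>N\<in>MS B B1 d. (\<Sum>bs\<in>{bs \<in> Seqs B B1 d. mset bs = N}. c bs * sg B1 bs) * Y B1 Bc N cs)" for c and cs
  proof -
    have "(\<Sum>bs\<in>Seqs B B1 d. c bs * yvec B1 Bc bs cs) =
      (\<Sum>N\<in>MS B B1 d. \<Sum>bs\<in>{bs \<in> Seqs B B1 d. mset bs = N}. c bs * yvec B1 Bc bs cs)"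
      using finS by (intro sum.group[symmetric]) (auto simp: MS_def)
    also have "\<dots> = (\<Sum>N\<in>MS B B1 d. (\<Sum>bs\<in>{bs \<in> Seqs B B1 d. mset bs = N}. c bs * sg B1 bs) * Y B1 Bc N cs)"
      by (intro sum.cong refl) (simp add: sum_distrib_left sum_distrib_right yvec_eq mult_ac)
    finally show ?thesis .
  qed
  show ?thesis
  proof (intro set_eqI iffI)
    fix z assume "z \<in> tGamma B B1 Bc d"
    then obtain c where z: "z = (\<lambda>cs. \<Sum>bs\<in>Seqs B B1 d. c bs * yvec B1 Bc bs cs)" by (auto simp: tGamma_def)
    show "z \<in> {(\<lambda>cs. \<Sum>N\<in>MS B B1 d. a N * Y B1 Bc N cs) | a. True}"
      unfolding z grp by (rule CollectI, rule exI[where x="\<lambda>N. \<Sum>bs\<in>{bs \<in> Seqs B B1 d. mset bs = N}. c bs * sg B1 bs"]) simp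
  next
    fix z assume "z \<in> {(\<lambda>cs. \<Sum>N\<in>MS B B1 d. a N * Y B1 Bc N cs) | a. True}"
    then obtain a where z: "z = (\<lambda>cs. \<Sum>N\<in>MS B B1 d. a N * Y B1 Bc N cs)" by blast
    define c where "c bs = (if bs = sorted_list_of_multiset (mset bs) then a (mset bs) * sg B1 bs else 0)" for bs
    have "(\<Sum>bs\<in>{bs \<in> Seqs B B1 d. mset bs = N}. c bs * sg B1 bs) = a N" if N: "N \<in> MS B B1 d" for N
    proof -
      let ?n = "sorted_list_of_multiset N"
      have nS: "?n \<in> {bs \<in> Seqs B B1 d. mset bs = N}"
        using N by (auto simp: MS_iff Seqs_def tuples_def simp flip: count_mset size_mset)
      have "(\<Sum>bs\<in>{bs \<in> Seqs B B1 d. mset bs = N}. c bs * sg B1 bs) =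
            (\<Sum>bs\<in>{bs \<in> Seqs B B1 d. mset bs = N}. if bs = ?n then a N else 0)"
        by (intro sum.cong refl) (auto simp: c_def mult.assoc)
      also have "\<dots> = a N" using nS finS by simp
      finally show ?thesis .
    qed
    then have zc: "z = (\<lambda>cs. \<Sum>bs\<in>Seqs B B1 d. c bs * yvec B1 Bc bs cs)"
      unfolding z grp by (auto intro!: sum.cong)
    show "z \<in> tGamma B B1 Bc d" unfolding tGamma_def zc by (rule CollectI, rule exI[where x=c], simp)
  qed
qed

lemma tform_lin1:
  "tform B B1 f d (\<lambda>i. \<Sum>N\<in>S. a N * v N i) w = (\<Sum>N\<in>S. a N * tform B B1 f d (v N) w)"
proof -
  let ?K = "\<lambda>bs cs. (-1) ^ tsign B1 bs cs * (\<Prod>k<d. f (bs ! k) (cs ! k))"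
  have "tform B B1 f d (\<lambda>i. \<Sum>N\<in>S. a N * v N i) w =
    (\<Sum>bs\<in>tuples B d. \<Sum>cs\<in>tuples B d. \<Sum>N\<in>S. a N * (v N bs * w cs * ?K bs cs))"
    unfolding tform_def by (intro sum.cong refl) (simp only: sum_distrib_left sum_distrib_right, intro sum.cong refl, simp add: mult_ac)
  also have "\<dots> = (\<Sum>bs\<in>tuples B d. \<Sum>N\<in>S. \<Sum>cs\<in>tuples B d. a N * (v N bs * w cs * ?K bs cs))"
    by (intro sum.cong refl) (rule sum.swap)
  also have "\<dots> = (\<Sum>N\<in>S. \<Sum>bs\<in>tuples B d. \<Sum>cs\<in>tuples B d. a N * (v N bs * w cs * ?K bs cs))"
    by (rule sum.swap)
  also have "\<dots> = (\<Sum>N\<in>S. a N * tform B B1 f d (v N) w)"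
    by (simp add: tform_def sum_distrib_left mult_ac)
  finally show ?thesis .
qed

lemma tform_lin2:
  "tform B B1 f d z (\<lambda>i. \<Sum>N\<in>S. b N * v N i) = (\<Sum>N\<in>S. b N * tform B B1 f d z (v N))"
proof -
  let ?K = "\<lambda>bs cs. (-1) ^ tsign B1 bs cs * (\<Prod>k<d. f (bs ! k) (cs ! k))"
  have "tform B B1 f d z (\<lambda>i. \<Sum>N\<in>S. b N * v N i) =
    (\<Sum>bs\<in>tuples B d. \<Sum>cs\<in>tuples B d. \<Sum>N\<in>S. b N * (z bs * v N cs * ?K bs cs))"
    unfolding tform_def by (intro sum.cong refl) (simp only: sum_distrib_left sum_distrib_right, intro sum.cong refl, simp add: mult_ac)
  also have "\<dots> = (\<Sum>bs\<in>tuples B d. \<Sum>N\<in>S. \<Sum>cs\<in>tuples B d. b N * (z bs * v N cs * ?K bs cs))"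
    by (intro sum.cong refl) (rule sum.swap)
  also have "\<dots> = (\<Sum>N\<in>S. \<Sum>bs\<in>tuples B d. \<Sum>cs\<in>tuples B d. b N * (z bs * v N cs * ?K bs cs))"
    by (rule sum.swap)
  also have "\<dots> = (\<Sum>N\<in>S. b N * tform B B1 f d z (v N))"
    by (simp add: tform_def sum_distrib_left mult_ac)
  finally show ?thesis .
qed

lemma tform_bil:
  "tform B B1 f d (\<lambda>i. \<Sum>N\<in>S. a N * v N i) (\<lambda>i. \<Sum>L\<in>S'. b L * w L i) =
   (\<Sum>N\<in>S. \<Sum>L\<in>S'. a N * b L * tform B B1 f d (v N) (w L))"
  by (simp add: tform_lin1 tform_lin2 sum_distrib_left mult_ac)

lemma tt_eq:
  fixes f :: "'b \<Rightarrow> 'b \<Rightarrow> 'r::{idom, ring_char_0}"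
  assumes "of_nat (fact d) dvd tform B B1 f d z w"
  shows "tform B B1 f d z w = of_nat (fact d) * tform_tilde B B1 f d z w"
proof -
  obtain r where r: "tform B B1 f d z w = of_nat (fact d) * r" using assms by (auto elim: dvdE)
  have nz: "(of_nat (fact d) :: 'r) \<noteq> 0" by simp
  have "tform_tilde B B1 f d z w = r"
    unfolding tform_tilde_def r by (rule the_equality) (use nz in auto)
  then show ?thesis using r by simp
qed

lemma tpar_pm:
  assumes "length cs = length bs" "pm B1 bs cs"
  shows "tpar B1 cs = tpar B1 bs"
proof -
  have "{i. i < length cs \<and> cs ! i \<in> B1} = {i. i < length bs \<and> bs ! i \<in> B1}"
    using assms by (auto simp: pm_def)
  then show ?thesis by (simp add: tpar_def length_filter_conv_card)
qed

lemma tform_parity_zero: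
  fixes f :: "'b \<Rightarrow> 'b \<Rightarrow> 'r::comm_ring_1"
  assumes evf: "evenf B B1 f" and z: "homog B1 p z" and w: "homog B1 q w" and pq: "p \<noteq> q"
  shows "tform B B1 f d z w = 0"
  unfolding tform_def
proof (intro sum.neutral ballI)
  fix bs cs assume bs: "bs \<in> tuples B d" and cs: "cs \<in> tuples B d"
  show "z bs * w cs * (-1) ^ tsign B1 bs cs * (\<Prod>k<d. f (bs ! k) (cs ! k)) = 0"
  proof (cases "z bs = 0 \<or> w cs = 0")
    case False
    then have "tpar B1 bs = p" "tpar B1 cs = q" using z w by (auto simp: homog_def)
    then have "\<not> pm B1 bs cs" using pq tpar_pm[of cs bs B1] bs cs by (auto simp: tuples_def)
    then show ?thesis using prod_nonpm[OF evf bs cs] by simp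
  qed auto
qed

lemma prod_sign_count:
  fixes d :: nat
  shows "(\<Prod>k<d. (-1::'r::comm_ring_1) ^ (if P k then 1 else 0)) = (-1) ^ card {k. k < d \<and> P k}"
proof -
  have "(\<Prod>k<d. (-1::'r) ^ (if P k then 1 else 0)) = (-1) ^ (\<Sum>k<d. if P k then 1 else 0)"
    by (simp add: power_sum)
  also have "(\<Sum>k<d. if P k then 1 else (0::nat)) = card {k. k < d \<and> P k}"
  proof -
    have e: "{k. k < d \<and> P k} = {k \<in> {..<d}. P k}" by auto
    have "card {k \<in> {..<d}. P k} = (\<Sum>k\<in>{k \<in> {..<d}. P k}. 1)" by simp
    also have "\<dots> = (\<Sum>k<d. if P k then 1 else (0::nat))" using sum.inter_filter[OF finite_lessThan[of d], of "\<lambda>_. 1::nat" P] by simp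
    finally show ?thesis unfolding e by simp
  qed
  finally show ?thesis .
qed

lemma tform_supersym:
  fixes g :: "'b \<Rightarrow> 'b \<Rightarrow> 'r::{idom, ring_char_0}"
  assumes evg: "evenf B B1 g"
    and sup: "\<forall>b\<in>B. \<forall>c\<in>B. g b c = \<epsilon> * (-1) ^ (if b \<in> B1 \<and> c \<in> B1 then 1 else 0) * g c b"
    and z: "homog B1 p z" and w: "homog B1 q w"
  shows "tform B B1 g d z w = \<epsilon> ^ d * (-1) ^ (p * q) * tform B B1 g d w z"
proof -
  have trm: "z bs * w cs * Gk B1 g d bs cs = \<epsilon> ^ d * (-1) ^ (p * q) * (w cs * z bs * Gk B1 g d cs bs)"
    if bs: "bs \<in> tuples B d" and cs: "cs \<in> tuples B d" for bs cs
  proof (cases "z bs = 0 \<or> w cs = 0")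
    case False
    then have tp: "tpar B1 bs = p" "tpar B1 cs = q" using z w by (auto simp: homog_def)
    have l: "length bs = d" "length cs = d" using bs cs by (auto simp: tuples_def)
    show ?thesis
    proof (cases "pm B1 bs cs")
      case False
      have "\<not> pm B1 cs bs" using pm_sym[of bs cs B1] l False by auto
      have p1: "(\<Prod>k<d. g (bs ! k) (cs ! k)) = 0" by (rule prod_nonpm[OF evg bs cs False])
      have p2: "(\<Prod>k<d. g (cs ! k) (bs ! k)) = 0" by (rule prod_nonpm[OF evg cs bs \<open>\<not> pm B1 cs bs\<close>])
      show ?thesis unfolding Gk_def p1 p2 by simp
    next
      case True
      have ts: "tsign B1 cs cs = tsign B1 bs bs" using tsign_pm_self[OF _ True] l by simp
      have qp: "q = p" using tpar_pm[OF _ True] l tp by simp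
      let ?m = "card {k. k < d \<and> bs ! k \<in> B1}"
      have mlen: "?m = length (filter (\<lambda>b. b \<in> B1) bs)" using l by (simp add: length_filter_conv_card)
      have "(\<Prod>k<d. g (bs ! k) (cs ! k)) = (\<Prod>k<d. \<epsilon> * (-1) ^ (if bs ! k \<in> B1 then 1 else 0) * g (cs ! k) (bs ! k))"
      proof (intro prod.cong refl)
        fix k assume "k \<in> {..<d}"
        then have k: "k < d" by simp
        then have "bs ! k \<in> B" "cs ! k \<in> B" "(bs ! k \<in> B1) = (cs ! k \<in> B1)"
          using bs cs True l by (auto simp: tuples_def pm_def)
        then show "g (bs ! k) (cs ! k) = \<epsilon> * (-1) ^ (if bs ! k \<in> B1 then 1 else 0) * g (cs ! k) (bs ! k)"
          using sup[rule_format, of "bs ! k" "cs ! k"] by (simp only: simp_thms)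
      qed
      also have "\<dots> = (\<Prod>k<d. \<epsilon>) * (\<Prod>k<d. (-1) ^ (if bs ! k \<in> B1 then 1 else 0)) * (\<Prod>k<d. g (cs ! k) (bs ! k))"
        by (simp only: prod.distrib)
      also have "\<dots> = \<epsilon> ^ d * (-1) ^ ?m * (\<Prod>k<d. g (cs ! k) (bs ! k))"
        by (simp only: prod_sign_count prod_constant card_lessThan)
      finally have pr: "(\<Prod>k<d. g (bs ! k) (cs ! k)) = \<epsilon> ^ d * (-1) ^ ?m * (\<Prod>k<d. g (cs ! k) (bs ! k))" .
      have pp: "((-1)::'r) ^ ?m = (-1) ^ (p * q)"
      proof -
        have "p = ?m mod 2" using tp mlen by (simp add: tpar_def)
        then have "p * q = ?m mod 2" using qp by (cases "even ?m") auto
        then show ?thesis by (simp add: minus_one_power_iff)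
      qed
      have G1: "Gk B1 g d bs cs = \<epsilon> ^ d * (-1) ^ (p * q) * Gk B1 g d cs bs"
        unfolding Gk_closed[OF evg bs cs] Gk_closed[OF evg cs bs] ts pr pp[symmetric] by (simp only: mult_ac)
      show ?thesis unfolding G1 by (simp only: mult_ac)
    qed
  qed auto
  have "tform B B1 g d z w = (\<Sum>bs\<in>tuples B d. \<Sum>cs\<in>tuples B d. z bs * w cs * Gk B1 g d bs cs)"
    by (simp add: tform_def Gk_def mult_ac)
  also have "\<dots> = (\<Sum>bs\<in>tuples B d. \<Sum>cs\<in>tuples B d. \<epsilon> ^ d * (-1) ^ (p * q) * (w cs * z bs * Gk B1 g d cs bs))"
    by (intro sum.cong refl) (simp add: trm)
  also have "\<dots> = \<epsilon> ^ d * (-1) ^ (p * q) * (\<Sum>cs\<in>tuples B d. \<Sum>bs\<in>tuples B d. w cs * z bs * Gk B1 g d cs bs)"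
    by (subst sum.swap) (simp add: sum_distrib_left)
  also have "(\<Sum>cs\<in>tuples B d. \<Sum>bs\<in>tuples B d. w cs * z bs * Gk B1 g d cs bs) = tform B B1 g d w z"
    by (simp add: tform_def Gk_def mult_ac)
  finally show ?thesis .
qed

theorem proposition3p11:
  fixes Ba Bc B1 B :: "'b::linorder set"
    and g :: "'b \<Rightarrow> 'b \<Rightarrow> 'r::{idom, ring_char_0}"
    and \<epsilon> :: 'r
    and d :: nat
  assumes pid: "pid_ring TYPE('r)"
    and finB: "finite B"
    and B_def: "B = Ba \<union> Bc \<union> B1"
    and disj: "Ba \<inter> Bc = {}" "Ba \<inter> B1 = {}" "Bc \<inter> B1 = {}"
    and even: "\<forall>b\<in>B. \<forall>c\<in>B. (b \<in> B1) \<noteq> (c \<in> B1) \<longrightarrow> g b c = 0"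
    and eps: "\<epsilon> = 1 \<or> \<epsilon> = -1"
    and supersym: "\<forall>b\<in>B. \<forall>c\<in>B. g b c = \<epsilon> * (-1) ^ (if b \<in> B1 \<and> c \<in> B1 then 1 else 0) * g c b"
    and nondeg: "perfect_pairing (fvec B) (fvec B) (vform B B g)"
    and iso: "\<forall>a\<in>Ba. \<forall>a'\<in>Ba. g a a' = 0"
    and perf: "perfect_pairing (fvec Ba) (fvec Bc) (vform Ba Bc g)"
  shows "(\<forall>z\<in>tGamma B B1 Bc d. \<forall>w\<in>tGamma B B1 Bc d. of_nat (fact d) dvd tform B B1 g d z w)
     \<and> (\<forall>z\<in>tGamma B B1 Bc d. \<forall>w\<in>tGamma B B1 Bc d. \<forall>p q. homog B1 p z \<and> homog B1 q w \<and> p \<noteq> q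
           \<longrightarrow> tform_tilde B B1 g d z w = 0)
     \<and> perfect_pairing (tGamma B B1 Bc d) (tGamma B B1 Bc d) (tform_tilde B B1 g d)
     \<and> (\<forall>z\<in>tGamma B B1 Bc d. \<forall>w\<in>tGamma B B1 Bc d. \<forall>p q. homog B1 p z \<and> homog B1 q w
           \<longrightarrow> tform_tilde B B1 g d z w = \<epsilon> ^ d * (-1) ^ (p * q) * tform_tilde B B1 g d w z)"
proof -
  have evg: "evenf B B1 g" using even by (simp add: evenf_def)
  obtain h where R: "\<forall>b\<in>B. \<forall>a\<in>B. (\<Sum>c\<in>B. g b c * h c a) = (if b = a then 1 else 0)"
    and Lh: "\<forall>b\<in>B. \<forall>a\<in>B. (\<Sum>c\<in>B. h b c * g c a) = (if b = a then 1 else 0)"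
    using inverse_exists[OF finB nondeg] by blast
  have evh: "evenf B B1 h" by (rule inverse_even[OF finB evg R Lh])
  have hCC: "\<forall>c\<in>Bc. \<forall>c'\<in>Bc. h c c' = 0" by (rule inverse_zero_CC[OF finB B_def disj evg iso perf R])
  have Bdef2: "B = Bc \<union> Ba \<union> B1" using B_def by auto
  have disj2: "Bc \<inter> Ba = {}" "Bc \<inter> B1 = {}" "Ba \<inter> B1 = {}" using disj by auto
  let ?S = "MS B B1 d"
  define T where "T N L = tform_tilde B B1 g d (Y B1 Bc N) (Y B1 Bc L)" for N L
  define W where "W N L = tform_tilde B B1 h d (Y B1 Ba N) (Y B1 Ba L)" for N L
  have fd0: "(of_nat (fact d) :: 'r) \<noteq> 0" by simp
  have tT: "tform B B1 g d (Y B1 Bc N) (Y B1 Bc L) = of_nat (fact d) * T N L" if "N \<in> ?S" "L \<in> ?S" for N L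
    unfolding T_def by (rule tt_eq[OF div_tform[OF finB B_def disj evg iso that]])
  have tW: "tform B B1 h d (Y B1 Ba N) (Y B1 Ba L) = of_nat (fact d) * W N L" if "N \<in> ?S" "L \<in> ?S" for N L
    unfolding W_def by (rule tt_eq[OF div_tform[OF finB Bdef2 disj2 evh hCC that]])
  have tG: "tGamma B B1 Bc d = {(\<lambda>cs. \<Sum>N\<in>?S. a N * Y B1 Bc N cs) | a. True}"
    by (rule tGamma_eq[OF finB])
  have tf: "tform B B1 g d (\<lambda>i. \<Sum>N\<in>?S. a N * Y B1 Bc N i) (\<lambda>i. \<Sum>L\<in>?S. b L * Y B1 Bc L i) =
      of_nat (fact d) * (\<Sum>N\<in>?S. \<Sum>L\<in>?S. a N * b L * T N L)" for a b
    unfolding tform_bil by (simp add: sum_distrib_left tT mult_ac)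
  have dvd1: "of_nat (fact d) dvd tform B B1 g d z w" if zG: "z \<in> tGamma B B1 Bc d" and wG: "w \<in> tGamma B B1 Bc d" for z w
  proof -
    obtain a where za: "z = (\<lambda>i. \<Sum>N\<in>?S. a N * Y B1 Bc N i)" using zG unfolding tG by blast
    obtain b where wb: "w = (\<lambda>i. \<Sum>L\<in>?S. b L * Y B1 Bc L i)" using wG unfolding tG by blast
    show ?thesis unfolding za wb tf by simp
  qed
  have tt: "tform B B1 g d z w = of_nat (fact d) * tform_tilde B B1 g d z w"
    if "z \<in> tGamma B B1 Bc d" "w \<in> tGamma B B1 Bc d" for z w
    by (rule tt_eq[OF dvd1[OF that]])
  have bil: "tform_tilde B B1 g d (\<lambda>i. \<Sum>N\<in>?S. a N * Y B1 Bc N i) (\<lambda>i. \<Sum>L\<in>?S. b L * Y B1 Bc L i) =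
      (\<Sum>N\<in>?S. \<Sum>L\<in>?S. a N * b L * T N L)" for a b
  proof -
    have m: "(\<lambda>i. \<Sum>N\<in>?S. a N * Y B1 Bc N i) \<in> tGamma B B1 Bc d" "(\<lambda>i. \<Sum>L\<in>?S. b L * Y B1 Bc L i) \<in> tGamma B B1 Bc d"
      unfolding tG by blast+
    show ?thesis using tt[OF m] tf[of a b] fd0 by simp
  qed
  have TW: "(\<Sum>K\<in>?S. T N K * W K L) = (if N = L then 1 else 0)" if "N \<in> ?S" "L \<in> ?S" for N L
  proof -
    have "(\<Sum>K\<in>?S. tform B B1 g d (Y B1 Bc N) (Y B1 Bc K) * tform B B1 h d (Y B1 Ba K) (Y B1 Ba L))
        = (if N = L then of_nat (fact d) ^ 2 else 0)"
      by (rule ident[OF finB B_def disj evg evh R that])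
    moreover have "(\<Sum>K\<in>?S. tform B B1 g d (Y B1 Bc N) (Y B1 Bc K) * tform B B1 h d (Y B1 Ba K) (Y B1 Ba L))
        = of_nat (fact d) ^ 2 * (\<Sum>K\<in>?S. T N K * W K L)"
      using that by (simp add: tT tW sum_distrib_left power2_eq_square mult_ac)
    ultimately show ?thesis using fd0 by (cases "N = L") auto
  qed
  have WT: "(\<Sum>K\<in>?S. W N K * T K L) = (if N = L then 1 else 0)" if "N \<in> ?S" "L \<in> ?S" for N L
  proof -
    have "(\<Sum>K\<in>?S. tform B B1 h d (Y B1 Ba N) (Y B1 Ba K) * tform B B1 g d (Y B1 Bc K) (Y B1 Bc L))
        = (if N = L then of_nat (fact d) ^ 2 else 0)"
      by (rule ident[OF finB Bdef2 disj2 evh evg Lh that])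
    moreover have "(\<Sum>K\<in>?S. tform B B1 h d (Y B1 Ba N) (Y B1 Ba K) * tform B B1 g d (Y B1 Bc K) (Y B1 Bc L))
        = of_nat (fact d) ^ 2 * (\<Sum>K\<in>?S. W N K * T K L)"
      using that by (simp add: tT tW sum_distrib_left power2_eq_square mult_ac)
    ultimately show ?thesis using fd0 by (cases "N = L") auto
  qed
  have P3: "perfect_pairing (tGamma B B1 Bc d) (tGamma B B1 Bc d) (tform_tilde B B1 g d)"
    by (rule pp_abstract[OF finite_MS[OF finB] tG bil TW WT])
  have P2: "tform_tilde B B1 g d z w = 0"
    if "z \<in> tGamma B B1 Bc d" "w \<in> tGamma B B1 Bc d" "homog B1 p z" "homog B1 q w" "p \<noteq> q" for z w p q
  proof -
    have "tform B B1 g d z w = 0" by (rule tform_parity_zero[OF evg that(3-5)])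
    then show ?thesis using tt[OF that(1,2)] fd0 by simp
  qed
  have P4: "tform_tilde B B1 g d z w = \<epsilon> ^ d * (-1) ^ (p * q) * tform_tilde B B1 g d w z"
    if "z \<in> tGamma B B1 Bc d" "w \<in> tGamma B B1 Bc d" "homog B1 p z" "homog B1 q w" for z w p q
  proof -
    have "tform B B1 g d z w = \<epsilon> ^ d * (-1) ^ (p * q) * tform B B1 g d w z"
      by (rule tform_supersym[OF evg supersym that(3,4)])
    then have "of_nat (fact d) * tform_tilde B B1 g d z w = of_nat (fact d) * (\<epsilon> ^ d * (-1) ^ (p * q) * tform_tilde B B1 g d w z)"
      using tt[OF that(1,2)] tt[OF that(2,1)] by (simp add: mult_ac)
    then show ?thesis using fd0 by simp
  qed
  show ?thesis using dvd1 P2 P3 P4 by blast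
qed

end
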